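(* In the left-censored disclosure game described in the context, let $N(e)=\max_{0\le k\le L(e)}D(e|_k)$, $\alpha=\frac{1-\sqrt{1-4pq}}{2}$, $$V(e)=\frac{1}{1+\frac{1-\pi_0}{\pi_0}\frac{p-\alpha}{q-\alpha}\left(\frac{q}{p}\right)^{N(e)+1}},\qquad n^\star=\log_{p/q}\!\left(\frac{p-\alpha}{q-\alpha}\right)-1 .$$ Then $n^\star>0$, and in any equilibrium $(\sigma^\star,\mathbf{a}^\star,\mu)$, for all $e\in E$: (1) $\mathbf{a}^\star(e)=\mu(e)=\min\{V(e),\nu(e)\}$; (2) $\sigma^\star(e|e)=1$ if and only if $D(e)\ge N(e)-n^\star$; (3) if $\sigma^\star(m|e)>0$, then $L(m)\ge\max\big(\arg\max_{0\le k\le L(e)}D(e|_k)\big)$.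
   Context: Left-censored disclosure game. A state $\omega\in\{G,B\}$ has prior probability $\pi_0\in(0,1)$ on $G$. The evidence space $E=\bigcup_{t\ge0}\{g,b\}^t$ is the set of finite sequences of signals in $\{g,b\}$, including the empty sequence $\emptyset$. For $e\in E$: $L(e)$ is its length, $G(e)$ and $B(e)$ the numbers of $g$'s and $b$'s, $D(e)=G(e)-B(e)$; for $e=(s_1,\dots,s_L)$ and $0<k\le L$, $e|_k=(s_{L-k+1},\dots,s_L)$, and $e|_0=\emptyset$. Parameters satisfy $1>p>q>0$ and $p+q<1$; evidence is drawn from $F_\omega$ with $F_G(e)=(1-p-q)p^{G(e)}q^{B(e)}$, $F_B(e)=(1-p-q)p^{B(e)}q^{G(e)}$. The disclosure rule: $e_1\precsim e_2$ iff $L(e_1)\le L(e_2)$ and $e_1=e_2|_{L(e_1)}$; a sender with evidence $e$ sends a message $m\precsim e$. The receiver takes action $a\in\mathbb{R}$ with payoff $-(a-\mathbf{1}\{\omega=G\})^2$ (so his optimal action equals his posterior belief on $G$); the sender's payoff is $a$. Let $UC(m)=\{e:m\precsim e\}$ and $\nu(e)=\frac{F_G(e)\pi_0}{F_G(e)\pi_0+F_B(e)(1-\pi_0)}$. A (truth-leaning) equilibrium is a triple $(\sigma^\star,\mathbf{a}^\star,\mu)$ with $\sigma^\star:E\to\Delta(E)$, $\mathrm{supp}\,\sigma^\star(\cdot|e)\subset\{m:m\precsim e\}$, $\mathbf{a}^\star:E\to\mathbb{R}$, $\mu:E\to[0,1]$, such that: (i) $\mathrm{supp}\,\sigma^\star(\cdot|e)\subset\arg\max_{m\precsim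 e}\mathbf{a}^\star(m)$ for all $e$; (ii) $\mathbf{a}^\star=\mu$; (iii) for every on-path message $m$ (i.e. $m\in\mathrm{supp}\,\sigma^\star(\cdot|e)$ for some $e$), $\mu(m)=\frac{\sum_{e\in UC(m)}\sigma^\star(m|e)F_G(e)\pi_0}{\sum_{e\in UC(m)}\sigma^\star(m|e)[F_G(e)\pi_0+F_B(e)(1-\pi_0)]}$; (iv) if $e\in\arg\max_{m\precsim e}\mathbf{a}^\star(m)$ then $\sigma^\star(e|e)=1$; (v) for every off-path $m$, $\mu(m)=\nu(m)$. *)

theory Defs
  imports "HOL-Probability.Probability_Mass_Function"
begin

datatype signal = sg | sb

type_synonym evidence = "signal list"

definition Gc :: "evidence \<Rightarrow> nat" where
  "Gc e = length (filter (\<lambda>s. s = sg) e)"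

definition Bc :: "evidence \<Rightarrow> nat" where
  "Bc e = length (filter (\<lambda>s. s = sb) e)"

definition Dd :: "evidence \<Rightarrow> int" where
  "Dd e = int (Gc e) - int (Bc e)"

definition restr :: "evidence \<Rightarrow> nat \<Rightarrow> evidence" where
  "restr e k = drop (length e - k) e"

definition prec :: "evidence \<Rightarrow> evidence \<Rightarrow> bool" where
  "prec m e \<longleftrightarrow> length m \<le> length e \<and> m = restr e (length m)"

definition FG :: "real \<Rightarrow> real \<Rightarrow> evidence \<Rightarrow> real" where
  "FG p q e = (1 - p - q) * p ^ Gc e * q ^ Bc e"

definition FB :: "real \<Rightarrow> real \<Rightarrow> evidence \<Rightarrow> real" where
  "FB p q e = (1 - p - q) * p ^ Bc e * q ^ Gc e"

definition nu :: "real \<Rightarrow> real \<Rightarrow> real \<Rightarrow> evidence \<Rightarrow> real" where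
  "nu p q \<pi>0 e = FG p q e * \<pi>0 / (FG p q e * \<pi>0 + FB p q e * (1 - \<pi>0))"

definition UC :: "evidence \<Rightarrow> evidence set" where
  "UC m = {e. prec m e}"

text \<open>Truth-leaning equilibrium (\<sigma>, a, \<mu>); \<sigma> e is the sender's mixed message given evidence e,
  so \<sigma>*(m|e) = pmf (\<sigma> e) m.\<close>
definition equilibrium ::
  "real \<Rightarrow> real \<Rightarrow> real \<Rightarrow> (evidence \<Rightarrow> evidence pmf) \<Rightarrow> (evidence \<Rightarrow> real) \<Rightarrow> (evidence \<Rightarrow> real) \<Rightarrow> bool"
  where
  "equilibrium p q \<pi>0 \<sigma> a \<mu> \<longleftrightarrow>
     (\<forall>e. set_pmf (\<sigma> e) \<subseteq> {m. prec m e}) \<and>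
     (\<forall>e. \<forall>m \<in> set_pmf (\<sigma> e). \<forall>m'. prec m' e \<longrightarrow> a m' \<le> a m) \<and>
     a = \<mu> \<and>
     (\<forall>m. (\<exists>e. m \<in> set_pmf (\<sigma> e)) \<longrightarrow>
        \<mu> m = (\<Sum>\<^sub>\<infinity>e\<in>UC m. pmf (\<sigma> e) m * FG p q e * \<pi>0) /
               (\<Sum>\<^sub>\<infinity>e\<in>UC m. pmf (\<sigma> e) m * (FG p q e * \<pi>0 + FB p q e * (1 - \<pi>0)))) \<and>
     (\<forall>e. (\<forall>m'. prec m' e \<longrightarrow> a m' \<le> a e) \<longrightarrow> pmf (\<sigma> e) e = 1) \<and>
     (\<forall>m. (\<nexists>e. m \<in> set_pmf (\<sigma> e)) \<longrightarrow> \<mu> m = nu p q \<pi>0 m)"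

definition Nmax :: "evidence \<Rightarrow> int" where
  "Nmax e = Max {Dd (restr e k) | k. k \<le> length e}"

definition alpha :: "real \<Rightarrow> real \<Rightarrow> real" where
  "alpha p q = (1 - sqrt (1 - 4 * p * q)) / 2"

definition Vval :: "real \<Rightarrow> real \<Rightarrow> real \<Rightarrow> evidence \<Rightarrow> real" where
  "Vval p q \<pi>0 e = 1 / (1 + (1 - \<pi>0) / \<pi>0 * ((p - alpha p q) / (q - alpha p q))
                              * (q / p) powi (Nmax e + 1))"

definition nstar :: "real \<Rightarrow> real \<Rightarrow> real" where
  "nstar p q = log (p / q) ((p - alpha p q) / (q - alpha p q)) - 1"

end

theory Submission
  imports Defs
begin

locale params =
  fixes p q :: real
  assumes q_pos: "0 < q" and qp: "q < p" and p1: "p < 1" and pq1: "p + q < 1"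
begin

definition z where "z = q / p"
definition al where "al = alpha p q"
definition be where "be = al / p"
definition ga where "ga = al / q"
definition K where "K = (p - al) / (q - al) * z"
definition S where "S = 1 / (1 - p - q)"

lemma p_pos: "0 < p" using q_pos qp by linarith
lemma z_pos: "0 < z" using q_pos p_pos by (simp add: z_def)
lemma z_lt1: "z < 1" using q_pos p_pos qp by (simp add: z_def)
lemma S_pos: "0 < S" using pq1 by (simp add: S_def)
lemma S_eq: "S * (1 - p - q) = 1" using pq1 by (simp add: S_def)
lemma pz: "p * z = q" using p_pos by (simp add: z_def)
lemma qz: "q / z = p" using p_pos q_pos by (simp add: z_def)

lemma disc: "0 \<le> 1 - 4*p*q"
proof -
  have e: "(p+q)^2 - 4*p*q = (p-q)^2" by (simp add: power2_eq_square algebra_simps)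
  have "(p+q)*(p+q) < 1*1" using pq1 q_pos p_pos by (intro mult_strict_mono) auto
  then have "(p+q)^2 < 1" by (simp add: power2_eq_square)
  then show ?thesis using e by (smt (verit) zero_le_power2)
qed

lemma sq: "sqrt (1 - 4*p*q) ^ 2 = 1 - 4*p*q" using disc by simp

lemma al_eq: "al * al = al - p * q"
proof -
  define s where "s = sqrt (1 - 4*p*q)"
  have a: "s = 1 - 2*al" by (simp add: al_def alpha_def s_def field_simps)
  have "s * s = 1 - 4*p*q" using sq by (simp add: s_def power2_eq_square)
  then have "(1 - 2*al)*(1 - 2*al) = 1 - 4*p*q" using a by simp
  then show ?thesis by (simp add: algebra_simps)
qed

lemma al_pos: "0 < al"
proof -
  have "sqrt (1 - 4*p*q) < sqrt 1" using p_pos q_pos by (intro real_sqrt_less_mono) simp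
  then show ?thesis by (simp add: al_def alpha_def)
qed

lemma al_lt_q: "al < q"
proof -
  have h: "0 < 1 - 2*q" using qp pq1 by linarith
  have "(p+q)*q < 1*q" using pq1 q_pos by (intro mult_strict_right_mono) auto
  then have "(1 - 2*q)^2 < 1 - 4*p*q"
    by (simp add: power2_eq_square algebra_simps)
  then have "sqrt ((1 - 2*q)^2) < sqrt (1 - 4*p*q)" by (intro real_sqrt_less_mono)
  then have "1 - 2*q < sqrt (1 - 4*p*q)" using h by simp
  then show ?thesis by (simp add: al_def alpha_def)
qed

lemma al_lt_p: "al < p" using al_lt_q qp by linarith

lemma be_pos: "0 < be" using al_pos p_pos by (simp add: be_def)
lemma ga_pos: "0 < ga" using al_pos q_pos by (simp add: ga_def)
lemma be_lt_ga: "be < ga" using al_pos q_pos qp by (simp add: be_def ga_def frac_less2)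
lemma ga_lt1: "ga < 1" using al_lt_q q_pos by (simp add: ga_def)
lemma be_lt1: "be < 1" using be_lt_ga ga_lt1 by linarith
lemma z_bg: "z = be / ga" using al_pos p_pos q_pos by (simp add: z_def be_def ga_def)
lemma zga: "z * ga = be" using z_bg ga_pos by simp
lemma be_rec: "be = q + p * be^2"
  using al_eq p_pos by (simp add: be_def power2_eq_square field_simps)
lemma ga_rec: "ga = p + q * ga^2"
  using al_eq q_pos by (simp add: ga_def power2_eq_square field_simps)
lemma K_bg: "K = (1 - be) / (1 - ga)"
  using al_lt_q al_lt_p p_pos q_pos by (simp add: K_def be_def ga_def z_def field_simps)
lemma K_ga: "K * (1 - ga) = 1 - be" using K_bg ga_lt1 by simp
lemma K_gt1: "1 < K" using K_bg be_lt_ga ga_lt1 by simp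
lemma K_pos: "0 < K" using K_gt1 by simp

lemma key_zero: "(ga - be) * (1 - p - q) = (1 - ga) * (1 - be) * (p - q)"
proof -
  have "(ga - be) * (1 - p - q) - (1 - ga) * (1 - be) * (p - q) = (al - p*q - al*al)*(p-q)/(p*q)"
    using p_pos q_pos by (simp add: ga_def be_def field_simps)
  then show ?thesis using al_eq by simp
qed

end

context params begin

lemma ident0:
  assumes xy: "x = y * z"
  shows "S*(x*(1-be*B) - th*(1-ga*G)) =
    (x - th) + p*(S*(x*z*(1-B) - th*(1-G))) + q*(S*(y*(1-be*be*B) - th*(1-ga*ga*G)))"
proof -
  have "S*(x*(1-be*B) - th*(1-ga*G)) -
    ((x - th) + p*(S*(x*z*(1-B) - th*(1-G))) + q*(S*(y*(1-be*be*B) - th*(1-ga*ga*G))))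
    = y*z*(S*(1-p-q) - 1) - S*y*z*B*(be - q - p*be^2) - th*(S*(1-p-q) - 1) + S*th*G*(ga - p - q*ga^2)
      + S*y*(p*z - q)*(1-z) + S*y*B*(p*z - q)*(z - be^2)"
    unfolding xy by (simp add: algebra_simps power2_eq_square)
  also have "\<dots> = 0"
  proof -
    have f1: "be - q - p*be^2 = 0" using be_rec by simp
    have f2: "ga - p - q*ga^2 = 0" using ga_rec by simp
    have f3: "S*(1-p-q) - 1 = 0" using S_eq by simp
    have f4: "p*z - q = 0" using pz by simp
    show ?thesis by (simp only: f1 f2 f3 f4)
  qed
  finally show ?thesis by simp
qed

lemma ident:
  assumes xy: "x = y * z"
  shows "S*(x*(1-be^(Suc m)) - th*(1-ga^(Suc m))) =
    (x - th) + p*(S*(x*z*(1-be^m) - th*(1-ga^m))) + q*(S*(y*(1-be^(Suc(Suc m))) - th*(1-ga^(Suc(Suc m)))))"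
  using ident0[OF xy, of "be^m" th "ga^m"] by (simp add: mult.assoc)

lemma geo:
  fixes b g :: real
  assumes "0 < b" "b \<le> g"
  shows "b^j * (\<Sum>i<Suc j. g^i) \<le> g^j * (\<Sum>i<Suc j. b^i)"
proof -
  have "b^j * g^i \<le> g^j * b^i" if "i < Suc j" for i
  proof -
    have "b^j = b^i * b^(j-i)" "g^j = g^i * g^(j-i)" using that by (simp_all flip: power_add)
    moreover have "b^(j-i) \<le> g^(j-i)" using assms by (intro power_mono) auto
    ultimately show ?thesis using assms
      by (simp add: mult_left_mono mult.assoc mult.left_commute)
  qed
  then have "(\<Sum>i<Suc j. b^j * g^i) \<le> (\<Sum>i<Suc j. g^j * b^i)" by (intro sum_mono) auto
  then show ?thesis by (simp only: sum_distrib_left)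
qed

lemma T1_core: "K * z^j * (1 - ga^(Suc j)) \<le> 1 - be^(Suc j)"
proof -
  have a: "1 - be^(Suc j) = (1 - be) * (\<Sum>i<Suc j. be^i)" by (rule one_diff_power_eq)
  have b: "1 - ga^(Suc j) = (1 - ga) * (\<Sum>i<Suc j. ga^i)" by (rule one_diff_power_eq)
  have zj: "z^j = be^j / ga^j" by (simp add: z_bg power_divide)
  have "K * z^j * (1 - ga^(Suc j)) = (1 - be) * (be^j * (\<Sum>i<Suc j. ga^i)) / ga^j"
    unfolding K_bg zj b using ga_lt1 ga_pos by (simp add: field_simps)
  also have "\<dots> \<le> (1 - be) * (ga^j * (\<Sum>i<Suc j. be^i)) / ga^j"
    using be_lt1 ga_pos be_pos be_lt_ga geo[of be ga j]
    by (intro divide_right_mono mult_left_mono) auto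
  also have "\<dots> = 1 - be^(Suc j)" using a ga_pos by simp
  finally show ?thesis .
qed

end

locale tpot = params +
  fixes th :: real and k :: int
  assumes th_pos: "0 < th" and k1: "th \<le> K * z powi k" and k2: "K * z powi (k+1) < th"
begin

definition Tf :: "int \<Rightarrow> real" where
  "Tf i = (if i \<le> k then S*(z powi i * (1 - be^(nat(k-i+1))) - th*(1 - ga^(nat(k-i+1))))
           else if i = k+1 then (z powi i - th) + q*(S*(z powi k*(1-be) - th*(1-ga)))
           else z powi i - th)"

lemma zpi_pos: "0 < z powi i" using z_pos by simp

lemma Tf_le: "i \<le> k \<Longrightarrow> Tf i = S*(z powi i * (1 - be^(Suc (nat(k-i)))) - th*(1 - ga^(Suc (nat(k-i)))))"
  by (simp add: Tf_def Suc_nat_eq_nat_zadd1 add.commute)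

lemma T1: assumes "i \<le> k" shows "0 \<le> Tf i"
proof -
  define j where "j = nat (k - i)"
  have kk: "k = i + int j" using assms by (simp add: j_def)
  have zk: "z powi k = z powi i * z^j" using z_pos by (simp add: kk power_int_add)
  have v1: "th \<le> K * z^j * z powi i" using k1 zk by (simp add: mult_ac)
  have "ga^(Suc j) \<le> 1" using ga_pos ga_lt1 by (intro power_le_one) auto
  then have g1: "0 \<le> 1 - ga^(Suc j)" by simp
  have "th*(1 - ga^(Suc j)) \<le> K * z^j * z powi i * (1 - ga^(Suc j))"
    using v1 g1 by (rule mult_right_mono)
  also have "\<dots> = z powi i * (K * z^j * (1 - ga^(Suc j)))" by (simp add: mult_ac)
  also have "\<dots> \<le> z powi i * (1 - be^(Suc j))"
    using T1_core zpi_pos[of i] by (intro mult_left_mono) auto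
  finally show ?thesis using assms S_pos by (simp add: Tf_le j_def)
qed

lemma zk1: "z powi (k+1) < th / K" using k2 K_pos by (simp add: field_simps)

lemma T2: assumes "k < i" shows "Tf i < 0"
proof (cases "i = k+1")
  case True
  have zk: "z powi k = z powi (k+1) / z" using z_pos by (simp add: power_int_add)
  define x where "x = z powi (k+1)"
  define y0 where "y0 = z powi k"
  have xy0: "x = y0 * z" using z_pos by (simp add: x_def y0_def power_int_add)
  have qq: "q * y0 = p * x" using pz by (simp add: xy0 mult_ac)
  have "Tf i = (x - th) + q*(S*(y0*(1-be) - th*(1-ga)))"
    using True by (simp add: Tf_def x_def y0_def)
  also have "\<dots> = (x - th) + S*(1-be)*(q*y0) - q*S*th*(1-ga)" by (simp add: algebra_simps)
  also have "\<dots> = x * (1 + p*S*(1-be)) - th*(1 + q*S*(1-ga))" unfolding qq by (simp add: algebra_simps)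
  also have "th*(1 + q*S*(1-ga)) = (th/K) * (1 + p*S*(1-be))"
  proof -
    have "(1 - ga)/(1-be) + S*(1-ga)*(p-q) = 1"
    proof -
      have "S*(1-ga)*(p-q) * (1 - be) = S * ((ga - be) * (1-p-q))"
        using key_zero by (simp add: mult_ac)
      also have "\<dots> = ga - be" using S_eq by (simp add: mult_ac)
      finally have "S*(1-ga)*(p-q) = (ga - be)/(1-be)" using be_lt1 by (simp add: field_simps)
      then show ?thesis using be_lt1 by (simp add: field_simps)
    qed
    then have H: "(1 - ga)/(1-be) = 1 - S*(1-ga)*(p-q)" by simp
    have iK: "1/K = (1-ga)/(1-be)" using K_bg by simp
    have bk: "(1-be)/K = 1-ga" using K_pos by (simp add: K_ga[symmetric])
    have "p*S*(1-be)/K = p*S*((1-be)/K)" by simp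
    then have "p*S*(1-be)/K = p*S*(1-ga)" using bk by simp
    then have "1/K + p*S*(1-be)/K = 1 - S*(1-ga)*(p-q) + p*S*(1-ga)" using iK H by simp
    then have "1/K + p*S*(1-be)/K = 1 + q*S*(1-ga)" by (simp add: algebra_simps)
    moreover have "(th/K)*(1 + p*S*(1-be)) = th*(1/K + p*S*(1-be)/K)"
      by (simp add: algebra_simps divide_inverse)
    ultimately show ?thesis by simp
  qed
  finally have e: "Tf i = (x - th/K) * (1 + p*S*(1-be))" by (simp add: algebra_simps)
  have "0 < 1 + p*S*(1-be)" using p_pos S_pos be_lt1 by (simp add: add_pos_nonneg)
  moreover have "x - th/K < 0" using zk1 x_def by simp
  ultimately show ?thesis using e by (simp add: mult_neg_pos)
next
  case False
  then have "k + 1 < i" using assms by simp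
  then have "z powi i \<le> z powi (k+1)" using z_pos z_lt1 by (intro power_int_decreasing) auto
  also have "\<dots> < th/K" by (rule zk1)
  also have "th/K < th" using K_gt1 th_pos by (simp add: divide_less_eq)
  finally show ?thesis using False assms by (simp add: Tf_def)
qed

lemma T4: "- Tf i \<le> th"
proof -
  consider "i \<le> k" | "i = k+1" | "k+1 < i" by linarith
  then show ?thesis
  proof cases
    case 1 then show ?thesis using T1[of i] th_pos by simp
  next
    case 2
    have "0 \<le> Tf k" using T1[of k] by simp
    then have "0 \<le> S*(z powi k*(1-be) - th*(1-ga))" by (simp add: Tf_def)
    then have "0 \<le> q*(S*(z powi k*(1-be) - th*(1-ga)))" using q_pos by simp
    then show ?thesis using 2 zpi_pos[of i] by (simp add: Tf_def)
  next
    case 3 then show ?thesis using zpi_pos[of i] by (simp add: Tf_def)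
  qed
qed

lemma T3: "(z powi i - th) + p * max 0 (Tf (i+1)) + q * max 0 (Tf (i-1)) \<le> Tf i"
proof -
  have zu: "z powi (i+1) = z powi i * z" using z_pos by (simp add: power_int_add)
  have zd: "z powi i = z powi (i-1) * z" using z_pos power_int_add[of z "i-1" 1] by simp
  consider (a) "i < k" | (b) "i = k" | (c) "i = k+1" | (d) "k+1 < i" by linarith
  then show ?thesis
  proof cases
    case a
    define m where "m = nat (k - i - 1)"
    have n0: "nat (k-i) = Suc m" "nat (k-(i+1)) = m" "nat (k-(i-1)) = Suc (Suc m)"
      using a by (simp_all add: m_def)
    have "max 0 (Tf (i+1)) = Tf (i+1)" "max 0 (Tf (i-1)) = Tf (i-1)" using T1[of "i+1"] T1[of "i-1"] a by auto
    moreover have "Tf i = (z powi i - th) + p * Tf (i+1) + q * Tf (i-1)"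
    proof -
      have e1: "Tf i = S*(z powi i * (1 - be^(Suc (Suc m))) - th*(1 - ga^(Suc (Suc m))))"
        using Tf_le[of i] a n0 by simp
      have e2: "Tf (i+1) = S*(z powi i * z * (1 - be^(Suc m)) - th*(1 - ga^(Suc m)))"
        using Tf_le[of "i+1"] a n0 zu by simp
      have e3: "Tf (i-1) = S*(z powi (i-1) * (1 - be^(Suc (Suc (Suc m)))) - th*(1 - ga^(Suc (Suc (Suc m)))))"
        using Tf_le[of "i-1"] a n0 by simp
      show ?thesis unfolding e1 e2 e3 by (rule ident[OF zd])
    qed
    ultimately show ?thesis by simp
  next
    case b
    have "max 0 (Tf (i+1)) = 0" using T2[of "i+1"] b by simp
    moreover have "max 0 (Tf (i-1)) = Tf (i-1)" using T1[of "i-1"] b by auto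
    moreover have "Tf i = (z powi i - th) + p * 0 + q * Tf (i-1)"
    proof -
      have n0: "nat (k-i) = 0" "nat (k-(i-1)) = Suc 0" using b by simp_all
      have e1: "Tf i = S*(z powi i * (1 - be^(Suc 0)) - th*(1 - ga^(Suc 0)))"
        using Tf_le[of i] b n0 by simp
      have e3: "Tf (i-1) = S*(z powi (i-1) * (1 - be^(Suc (Suc 0))) - th*(1 - ga^(Suc (Suc 0))))"
        using Tf_le[of "i-1"] b n0 by simp
      show ?thesis unfolding e1 e3 using ident[OF zd, where th=th and m=0] by simp
    qed
    ultimately show ?thesis by simp
  next
    case c
    have "max 0 (Tf (i+1)) = 0" using T2[of "i+1"] c by simp
    moreover have "max 0 (Tf (i-1)) = Tf (i-1)" using T1[of "i-1"] c by auto
    moreover have "Tf i = (z powi i - th) + q * Tf (i-1)"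
      using c by (simp add: Tf_def)
    ultimately show ?thesis by simp
  next
    case d
    have "max 0 (Tf (i+1)) = 0" "max 0 (Tf (i-1)) = 0" using T2[of "i+1"] T2[of "i-1"] d by auto
    then show ?thesis using d by (simp add: Tf_def)
  qed
qed

lemma T_node:
  "(z powi i - th) + (if bg then p * Tf (i+1) else 0) + (if bb then q * Tf (i-1) else 0) \<le> Tf i"
proof -
  have "(if bg then p * Tf (i+1) else 0) \<le> p * max 0 (Tf (i+1))" using p_pos
    by (auto intro: mult_left_mono)
  moreover have "(if bb then q * Tf (i-1) else 0) \<le> q * max 0 (Tf (i-1))" using q_pos
    by (auto intro: mult_left_mono)
  ultimately show ?thesis using T3[of i] by linarith
qed

end

lemma Kid_gen:
  fixes K z ga :: real
  assumes "K*(1-ga) = 1 - z*ga"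
  shows "K*(1-z) - (K-z)*ga*(1-z*ga) = (1-z*ga)*(1-z)"
proof -
  have "K*(1-z) - (K-z)*ga*(1-z*ga) - (1-z*ga)*(1-z) = (K*(1-ga) - (1 - z*ga))*(1 - z - z*ga)"
    by (simp add: algebra_simps)
  then show ?thesis using assms by simp
qed

context params begin

definition phi2 :: "int \<Rightarrow> int \<Rightarrow> real" where
  "phi2 d n = K * z powi n - (K * z powi n - z powi (n+1)) * ga^(Suc (nat (n - d)))"

lemma zpos': "0 < z powi i" using z_pos by simp
lemma zsucc: "z powi (n+1) = z powi n * z" using z_pos by (simp add: power_int_add)

lemma Kz_ge: "0 \<le> K * z powi n - z powi (n+1)"
proof -
  have "z powi (n+1) = z powi n * z" by (rule zsucc)
  also have "\<dots> \<le> z powi n * K" using K_gt1 z_lt1 zpos'[of n] by (intro mult_left_mono) auto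
  finally show ?thesis by (simp add: mult.commute)
qed

lemma phi2_nonneg: "0 \<le> phi2 d n"
proof -
  have g: "ga^(Suc (nat (n - d))) \<le> 1" using ga_pos ga_lt1 by (intro power_le_one) auto
  have "(K * z powi n - z powi (n+1)) * ga^(Suc (nat (n - d))) \<le> (K * z powi n - z powi (n+1)) * 1"
    using Kz_ge g by (intro mult_left_mono) auto
  also have "\<dots> \<le> K * z powi n" using zpos'[of "n+1"] by simp
  finally show ?thesis by (simp add: phi2_def)
qed

lemma phi2_diag: "phi2 n n = z powi n"
proof -
  have "phi2 n n = z powi n * (K*(1-ga) + z*ga)" unfolding phi2_def zsucc by (simp add: algebra_simps)
  also have "K*(1-ga) + z*ga = 1" using K_ga zga by simp
  finally show ?thesis by simp
qed

lemma hm: "z^m * (K - (K-z)*ga^(Suc m)) \<le> 1"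
proof (induction m)
  case 0
  have "K - (K-z)*ga = K*(1-ga) + z*ga" by (simp add: algebra_simps)
  then show ?case using K_ga zga by simp
next
  case (Suc m)
  have key: "K*(1-z) - (K-z)*ga*(1-z*ga) = (1-z*ga)*(1-z)"
    using Kid_gen[of K ga z] K_ga zga by simp
  have kz: "0 \<le> K - z" using K_gt1 z_lt1 by simp
  have gm: "ga^(Suc m) \<le> ga" using ga_pos ga_lt1 power_decreasing[of 1 "Suc m" ga] by simp
  have zg: "0 \<le> 1 - z*ga" using zga be_lt1 by simp
  have "(K-z)*ga^(Suc m)*(1-z*ga) \<le> (K-z)*ga*(1-z*ga)"
    using kz gm zg by (intro mult_right_mono mult_left_mono) auto
  also have "\<dots> \<le> K*(1-z)"
  proof -
    have "0 \<le> (1-z*ga)*(1-z)" using zg z_lt1 by simp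
    then show ?thesis using key by linarith
  qed
  finally have a: "(K-z)*ga^(Suc m)*(1-z*ga) \<le> K*(1-z)" .
  have "z * (K - (K-z)*ga^(Suc (Suc m))) \<le> K - (K-z)*ga^(Suc m)"
    using a by (simp add: algebra_simps)
  then have "z^m * (z * (K - (K-z)*ga^(Suc (Suc m)))) \<le> z^m * (K - (K-z)*ga^(Suc m))"
    using z_pos by (intro mult_left_mono) auto
  moreover have "z^(Suc m) * (K - (K-z)*ga^(Suc (Suc m))) = z^m * (z * (K - (K-z)*ga^(Suc (Suc m))))"
    by (simp add: mult.assoc mult.left_commute)
  ultimately show ?case using Suc.IH by linarith
qed

lemma phi2_le: assumes "d \<le> n" shows "phi2 d n \<le> z powi d"
proof -
  define m where "m = nat (n - d)"
  have nn: "n = d + int m" using assms by (simp add: m_def)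
  have zn: "z powi n = z powi d * z^m" using z_pos by (simp add: nn power_int_add)
  have zn1: "z powi (n+1) = z powi d * z^m * z" using zn zsucc by simp
  have mm: "nat (n - d) = m" by (simp add: m_def)
  have "phi2 d n = K * (z powi d * z^m) - (K * (z powi d * z^m) - z powi d * z^m * z) * ga^(Suc m)"
    unfolding phi2_def zn zn1 mm ..
  also have "\<dots> = z powi d * (z^m * (K - (K-z)*ga^(Suc m)))" by (simp add: algebra_simps)
  finally have "phi2 d n = z powi d * (z^m * (K - (K-z)*ga^(Suc m)))" .
  also have "\<dots> \<le> z powi d * 1" using hm[of m] zpos'[of d] by (intro mult_left_mono) auto
  finally show ?thesis by simp
qed

lemma phi2_rec:
  assumes "d \<le> n"
  shows "S * phi2 d n = K * z powi n + S * p * phi2 (d+1) (max n (d+1)) + S * q * phi2 (d-1) n"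
proof (cases "d < n")
  case True
  define j where "j = nat (n - d - 1)"
  have n0: "nat (n-d) = Suc j" "nat (n-(d+1)) = j" "nat (n-(d-1)) = Suc (Suc j)"
    using True by (simp_all add: j_def)
  have mx: "max n (d+1) = n" using True by simp
  define A where "A = K * z powi n"
  define Bq where "Bq = K * z powi n - z powi (n+1)"
  have e1: "phi2 d n = A - Bq * ga^(Suc (Suc j))" by (simp add: phi2_def n0 A_def Bq_def)
  have e2: "phi2 (d+1) n = A - Bq * ga^(Suc j)" by (simp add: phi2_def n0 A_def Bq_def)
  have e3: "phi2 (d-1) n = A - Bq * ga^(Suc (Suc (Suc j)))" by (simp add: phi2_def n0 A_def Bq_def)
  have "S * (A - Bq * ga^(Suc (Suc j))) - (A + S*p*(A - Bq * ga^(Suc j)) + S*q*(A - Bq * ga^(Suc (Suc (Suc j)))))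
      = A*(S*(1-p-q) - 1) - S*Bq*ga^(Suc j)*(ga - p - q*ga^2)"
    by (simp add: algebra_simps power2_eq_square)
  also have "\<dots> = 0" using S_eq ga_rec by simp
  finally show ?thesis by (simp add: mx e1 e2 e3 A_def)
next
  case False
  then have dn: "d = n" using assms by simp
  define A where "A = K * z powi n"
  define Bq where "Bq = K * z powi n - z powi (n+1)"
  have e1: "phi2 n n = A - Bq * ga" by (simp add: phi2_def A_def Bq_def)
  have e1': "A - Bq * ga = z powi n" using phi2_diag[of n] e1 by simp
  have e2: "phi2 (n+1) (n+1) = z powi (n+1)" by (rule phi2_diag)
  have e3: "phi2 (n-1) n = A - Bq * ga^2" by (simp add: phi2_def A_def Bq_def numeral_2_eq_2)
  have bq: "Bq = A - z powi (n+1)" by (simp add: A_def Bq_def)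
  have "S * (A - Bq * ga) - (A + S*p*z powi (n+1) + S*q*(A - Bq * ga^2))
       = A*(S*(1-p-q) - 1) + S*Bq*(q*ga^2 - ga + p)"
    by (simp add: bq algebra_simps power2_eq_square)
  also have "\<dots> = 0" using S_eq ga_rec by simp
  finally show ?thesis using dn e1 e2 e3 by (simp add: A_def)
qed

end

lemma prec_iff: "prec m e \<longleftrightarrow> (\<exists>x. e = x @ m)"
proof
  assume "prec m e"
  then have "length m \<le> length e" "m = drop (length e - length m) e"
    by (auto simp: prec_def restr_def)
  then have "e = take (length e - length m) e @ m" by (metis append_take_drop_id)
  then show "\<exists>x. e = x @ m" by blast
next
  assume "\<exists>x. e = x @ m"
  then obtain x where "e = x @ m" by blast
  then show "prec m e" by (simp add: prec_def restr_def)
qed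

lemma prec_refl[simp]: "prec m m" by (simp add: prec_iff)
lemma prec_Nil[simp]: "prec [] e" by (simp add: prec_iff)
lemma prec_trans: "prec a b \<Longrightarrow> prec b c \<Longrightarrow> prec a c"
  by (auto simp: prec_iff)
lemma prec_len: "prec m e \<Longrightarrow> length m \<le> length e" by (auto simp: prec_iff)
lemma prec_Cons: "prec m (s # t) \<longleftrightarrow> m = s # t \<or> prec m t"
proof
  assume "prec m (s # t)"
  then obtain x where x: "s # t = x @ m" by (auto simp: prec_iff)
  show "m = s # t \<or> prec m t"
  proof (cases x)
    case Nil then show ?thesis using x by simp
  next
    case (Cons y ys) then show ?thesis using x by (auto simp: prec_iff)
  qed
next
  assume "m = s # t \<or> prec m t"
  then show "prec m (s # t)" by (auto simp: prec_iff intro: exI[of _ "s # _"])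
qed
lemma prec_Cons_self: "prec (s # t) u \<Longrightarrow> prec t u"
  using prec_trans[of t "s#t" u] prec_Cons[of t s t] by auto
lemma prec_antisym: "prec a b \<Longrightarrow> prec b a \<Longrightarrow> a = b"
  by (auto simp: prec_iff)
lemma not_prec_Cons: "\<not> prec (s # t) t" using prec_len by fastforce

lemma suffixes_eq: "{m. prec m e} = (\<lambda>k. drop k e) ` {..length e}"
proof
  show "{m. prec m e} \<subseteq> (\<lambda>k. drop k e) ` {..length e}"
  proof
    fix m assume "m \<in> {m. prec m e}"
    then obtain x where "e = x @ m" by (auto simp: prec_iff)
    then show "m \<in> (\<lambda>k. drop k e) ` {..length e}" by (intro image_eqI[of _ _ "length x"]) auto
  qed
  show "(\<lambda>k. drop k e) ` {..length e} \<subseteq> {m. prec m e}"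
  proof
    fix m assume "m \<in> (\<lambda>k. drop k e) ` {..length e}"
    then obtain k where "m = drop k e" by auto
    then have "e = take k e @ m" by simp
    then show "m \<in> {m. prec m e}" by (auto simp: prec_iff)
  qed
qed

lemma finite_suffixes[simp]: "finite {m. prec m e}" by (simp add: suffixes_eq)

lemma suffixes_restr: "{m. prec m e} = {restr e k | k. k \<le> length e}"
proof (rule set_eqI)
  fix m show "m \<in> {m. prec m e} \<longleftrightarrow> m \<in> {restr e k | k. k \<le> length e}"
    by (auto simp: prec_def restr_def)
qed

lemma Gc_Nil[simp]: "Gc [] = 0" and Bc_Nil[simp]: "Bc [] = 0" by (simp_all add: Gc_def Bc_def)
lemma Gc_Cons[simp]: "Gc (sg # t) = Suc (Gc t)" "Gc (sb # t) = Gc t" by (simp_all add: Gc_def)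
lemma Bc_Cons[simp]: "Bc (sg # t) = Bc t" "Bc (sb # t) = Suc (Bc t)" by (simp_all add: Bc_def)
lemma Gc_app[simp]: "Gc (x @ y) = Gc x + Gc y" by (simp add: Gc_def)
lemma Bc_app[simp]: "Bc (x @ y) = Bc x + Bc y" by (simp add: Bc_def)
lemma Dd_Nil[simp]: "Dd [] = 0" by (simp add: Dd_def)
lemma Dd_Cons[simp]: "Dd (sg # t) = Dd t + 1" "Dd (sb # t) = Dd t - 1" by (simp_all add: Dd_def)

lemma signal_UNIV: "(UNIV :: signal set) = {sg, sb}" using signal.exhaust by auto
lemma finite_signal: "finite (UNIV :: signal set)" by (subst signal_UNIV) simp

lemma FG_Cons[simp]: "FG p q (sg # t) = p * FG p q t" "FG p q (sb # t) = q * FG p q t"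
  by (simp_all add: FG_def)
lemma FB_Cons[simp]: "FB p q (sg # t) = q * FB p q t" "FB p q (sb # t) = p * FB p q t"
  by (simp_all add: FB_def)

definition Nm :: "evidence \<Rightarrow> int" where "Nm e = Max (Dd ` {m. prec m e})"

lemma Nmax_Nm: "Nmax e = Nm e"
proof -
  have "{Dd (restr e k) | k. k \<le> length e} = Dd ` {m. prec m e}" unfolding suffixes_restr by auto
  then show ?thesis unfolding Nmax_def Nm_def by simp
qed

lemma Nm_ge: "prec m e \<Longrightarrow> Dd m \<le> Nm e"
  unfolding Nm_def by (rule Max_ge) auto
lemma Dd_le_Nm: "Dd e \<le> Nm e" using Nm_ge[of e e] by simp
lemma Nm_nonneg: "0 \<le> Nm e" using Nm_ge[of "[]" e] by simp
lemma Nm_attained: "\<exists>y. prec y e \<and> Dd y = Nm e"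
proof -
  have "Nm e \<in> Dd ` {m. prec m e}" unfolding Nm_def by (rule Max_in) (simp, use prec_Nil[of e] in blast)
  then show ?thesis by auto
qed
lemma Nm_mono: "prec y e \<Longrightarrow> Nm y \<le> Nm e"
proof -
  assume "prec y e"
  obtain w where "prec w y" "Dd w = Nm y" using Nm_attained by blast
  then show ?thesis using Nm_ge[of w e] \<open>prec y e\<close> prec_trans by fastforce
qed
lemma Nm_Cons: "Nm (s # t) = max (Dd (s # t)) (Nm t)"
proof -
  have "{m. prec m (s # t)} = insert (s # t) {m. prec m t}" by (auto simp: prec_Cons)
  moreover have "Dd ` {m. prec m t} \<noteq> {}" using prec_Nil[of t] by blast
  ultimately show ?thesis unfolding Nm_def by (simp only: image_insert) (subst Max_insert, auto)
qed
lemma Nm_Cons_sg: "Nm (sg # t) = max (Nm t) (Dd t + 1)" by (simp add: Nm_Cons max.commute)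
lemma Nm_Cons_sb: "Nm (sb # t) = Nm t" using Dd_le_Nm[of t] by (simp add: Nm_Cons)

lemma finite_len: "finite {x :: signal list. length x = n}"
proof -
  have "{x :: signal list. length x = n} = {x. set x \<subseteq> UNIV \<and> length x = n}" by simp
  also have "finite \<dots>" using finite_signal by (intro finite_lists_length_eq)
  finally show ?thesis .
qed

lemma len_Suc_eq: "{x :: signal list. length x = Suc n} = Cons sg ` {x. length x = n} \<union> Cons sb ` {x. length x = n}"
proof
  show "{x :: signal list. length x = Suc n} \<subseteq> Cons sg ` {x. length x = n} \<union> Cons sb ` {x. length x = n}"
  proof
    fix x :: "signal list" assume "x \<in> {x. length x = Suc n}"
    then obtain s y where xy: "x = s # y" "length y = n" by (cases x) auto
    then show "x \<in> Cons sg ` {x. length x = n} \<union> Cons sb ` {x. length x = n}" by (cases s) auto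
  qed
qed auto

lemma sum_layer:
  fixes a b :: real
  shows "(\<Sum>x\<in>{x :: signal list. length x = n}. a ^ Gc x * b ^ Bc x) = (a + b) ^ n"
proof (induction n)
  case 0 then show ?case by simp
next
  case (Suc n)
  let ?L = "{x :: signal list. length x = n}"
  have d: "Cons sg ` ?L \<inter> Cons sb ` ?L = {}" by auto
  have "(\<Sum>x\<in>{x :: signal list. length x = Suc n}. a ^ Gc x * b ^ Bc x)
      = (\<Sum>x\<in>Cons sg ` ?L. a ^ Gc x * b ^ Bc x) + (\<Sum>x\<in>Cons sb ` ?L. a ^ Gc x * b ^ Bc x)"
    unfolding len_Suc_eq by (rule sum.union_disjoint) (use finite_len d in auto)
  also have "(\<Sum>x\<in>Cons sg ` ?L. a ^ Gc x * b ^ Bc x) = (\<Sum>x\<in>?L. a * (a ^ Gc x * b ^ Bc x))"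
    by (subst sum.reindex) (auto simp: inj_on_def mult.assoc)
  also have "(\<Sum>x\<in>Cons sb ` ?L. a ^ Gc x * b ^ Bc x) = (\<Sum>x\<in>?L. b * (a ^ Gc x * b ^ Bc x))"
    by (subst sum.reindex) (auto simp: inj_on_def mult_ac)
  finally show ?case using Suc.IH by (simp add: sum_distrib_left[symmetric] algebra_simps)
qed

lemma sum_layers:
  fixes a b :: real
  shows "(\<Sum>x\<in>{x :: signal list. length x < N}. a ^ Gc x * b ^ Bc x) = (\<Sum>n<N. (a + b) ^ n)"
proof (induction N)
  case 0 then show ?case by simp
next
  case (Suc N)
  have e: "{x :: signal list. length x < Suc N} = {x. length x < N} \<union> {x. length x = N}" by auto
  have f: "finite {x :: signal list. length x < N}"
  proof -
    have "{x :: signal list. length x < N} = (\<Union>n<N. {x. length x = n})" by auto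
    then show ?thesis using finite_len by simp
  qed
  show ?case unfolding e
    by (subst sum.union_disjoint) (use f finite_len Suc.IH sum_layer in auto)
qed

lemma finite_sub_len: "finite F \<Longrightarrow> \<exists>N. F \<subseteq> {x :: signal list. length x < N}"
proof -
  assume "finite F"
  then have "finite (length ` F)" by simp
  then obtain N where "\<forall>n\<in>length ` F. n < N" using finite_nat_set_iff_bounded by blast
  then show ?thesis by auto
qed

context params begin

lemma FG_pos: "0 < FG p q t" using p_pos q_pos pq1 by (simp add: FG_def)
lemma FB_pos: "0 < FB p q t" using p_pos q_pos pq1 by (simp add: FB_def)

lemma FB_FG: "FB p q t = FG p q t * z powi Dd t"
proof (induction t)
  case Nil then show ?case by (simp add: FB_def FG_def)
next
  case (Cons s t)
  have zu: "z powi (Dd t + 1) = z powi Dd t * z" using z_pos by (simp add: power_int_add)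
  have zd: "z powi (Dd t) = z powi (Dd t - 1) * z" using z_pos power_int_add[of z "Dd t - 1" 1] by simp
  show ?case
  proof (cases s)
    case sg
    show ?thesis using Cons pz by (simp add: sg zu mult_ac)
  next
    case sb
    have qX: "\<And>X. p * (X * z) = q * X" using pz by (metis mult.assoc mult.commute)
    have "p * (FG p q t * z powi Dd t) = p * ((FG p q t * z powi (Dd t - 1)) * z)"
      by (subst zd) (simp add: mult_ac)
    also have "\<dots> = q * FG p q t * z powi (Dd t - 1)" using qX[of "FG p q t * z powi (Dd t - 1)"] by (simp add: mult.assoc)
    finally have "p * (FG p q t * z powi Dd t) = q * FG p q t * z powi (Dd t - 1)" .
    then show ?thesis using Cons by (simp add: sb)
  qed
qed

lemma FG_app: "FG p q (x @ t) = FG p q x * FG p q t * S"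
  using pq1 by (simp add: FG_def S_def power_add field_simps)
lemma FB_app: "FB p q (x @ t) = FB p q x * FB p q t * S"
  using pq1 by (simp add: FB_def S_def power_add field_simps)

lemma FG_fin_le: "finite F \<Longrightarrow> sum (FG p q) F \<le> 1"
proof -
  assume "finite F"
  then obtain N where N: "F \<subseteq> {x :: signal list. length x < N}" using finite_sub_len by blast
  have fN: "finite {x :: signal list. length x < N}"
  proof -
    have "{x :: signal list. length x < N} = (\<Union>n<N. {x. length x = n})" by auto
    then show ?thesis using finite_len by simp
  qed
  have "sum (FG p q) F \<le> sum (FG p q) {x. length x < N}"
    using N fN FG_pos by (intro sum_mono2) (auto intro: less_imp_le)
  also have "\<dots> = (1-p-q) * (\<Sum>x\<in>{x. length x < N}. p ^ Gc x * q ^ Bc x)"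
    by (simp add: FG_def sum_distrib_left mult_ac)
  also have "\<dots> = (1-p-q) * (\<Sum>n<N. (p + q) ^ n)" by (simp add: sum_layers)
  also have "\<dots> = 1 - (p+q)^N"
  proof -
    have nz: "1 - (p+q) \<noteq> 0" using pq1 by simp
    have "1 - (p+q)^N = (1 - (p+q)) * (\<Sum>n<N. (p+q)^n)" by (rule one_diff_power_eq)
    then show ?thesis by (simp add: algebra_simps)
  qed
  also have "\<dots> \<le> 1" using p_pos q_pos by simp
  finally show ?thesis .
qed

lemma FB_fin_le: "finite F \<Longrightarrow> sum (FB p q) F \<le> 1"
proof -
  assume "finite F"
  then obtain N where N: "F \<subseteq> {x :: signal list. length x < N}" using finite_sub_len by blast
  have fN: "finite {x :: signal list. length x < N}"
  proof -
    have "{x :: signal list. length x < N} = (\<Union>n<N. {x. length x = n})" by auto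
    then show ?thesis using finite_len by simp
  qed
  have "sum (FB p q) F \<le> sum (FB p q) {x. length x < N}"
    using N fN FB_pos by (intro sum_mono2) (auto intro: less_imp_le)
  also have "\<dots> = (1-p-q) * (\<Sum>x\<in>{x. length x < N}. q ^ Gc x * p ^ Bc x)"
    by (simp add: FB_def sum_distrib_left mult_ac)
  also have "\<dots> = (1-p-q) * (\<Sum>n<N. (q + p) ^ n)" by (simp add: sum_layers)
  also have "\<dots> = 1 - (p+q)^N"
  proof -
    have nz: "1 - (p+q) \<noteq> 0" using pq1 by simp
    have "1 - (p+q)^N = (1 - (p+q)) * (\<Sum>n<N. (p+q)^n)" by (rule one_diff_power_eq)
    then show ?thesis by (simp add: algebra_simps add.commute[of q p])
  qed
  also have "\<dots> \<le> 1" using p_pos q_pos by simp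
  finally show ?thesis .
qed

lemma FG_summable: "FG p q summable_on A"
proof -
  have "FG p q summable_on UNIV"
    by (rule nonneg_bdd_above_summable_on) (use FG_pos FG_fin_le in \<open>auto intro: less_imp_le bdd_aboveI[where M=1]\<close>)
  then show ?thesis by (rule summable_on_subset_banach) simp
qed

lemma FB_summable: "FB p q summable_on A"
proof -
  have "FB p q summable_on UNIV"
    by (rule nonneg_bdd_above_summable_on) (use FB_pos FB_fin_le in \<open>auto intro: less_imp_le bdd_aboveI[where M=1]\<close>)
  then show ?thesis by (rule summable_on_subset_banach) simp
qed

lemma FB_infsum_le: "infsum (FB p q) UNIV \<le> 1"
  by (rule infsum_le_finite_sums) (use FB_summable FB_fin_le in auto)

definition UU :: "evidence \<Rightarrow> evidence set" where "UU t = {u. prec t u}"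

lemma UU_range: "UU t = (\<lambda>x. x @ t) ` UNIV" by (auto simp: UU_def prec_iff)

lemma FB_UU: "infsum (FB p q) (UU t) \<le> S * FB p q t"
proof -
  have inj: "inj_on (\<lambda>x. x @ t) UNIV" by (auto simp: inj_on_def)
  have "infsum (FB p q) (UU t) = infsum (\<lambda>x. FB p q (x @ t)) UNIV"
    unfolding UU_range by (subst infsum_reindex[OF inj]) (simp add: o_def)
  also have "\<dots> = infsum (\<lambda>x. (S * FB p q t) * FB p q x) UNIV" by (simp add: FB_app mult_ac)
  also have "\<dots> = (S * FB p q t) * infsum (FB p q) UNIV"
    by (rule infsum_cmult_right) (rule FB_summable)
  also have "\<dots> \<le> (S * FB p q t) * 1"
    using FB_infsum_le S_pos FB_pos[of t] by (intro mult_left_mono) auto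
  finally show ?thesis by simp
qed

end

lemma infsum_ge_elem:
  fixes f :: "'a \<Rightarrow> real"
  assumes "f summable_on A" "\<And>y. y \<in> A \<Longrightarrow> 0 \<le> f y" "x \<in> A"
  shows "f x \<le> infsum f A"
proof -
  have "infsum f {x} \<le> infsum f A"
    by (rule infsum_mono_neutral) (use assms in auto)
  then show ?thesis by simp
qed

lemma suffix_total: "prec a t \<Longrightarrow> prec b t \<Longrightarrow> prec a b \<or> prec b a"
proof -
  assume "prec a t" "prec b t"
  then obtain x y where "t = x @ a" and "t = y @ b" unfolding prec_iff by blast
  then have "x @ a = y @ b" by simp
  then obtain us where "(x = y @ us \<and> us @ a = b) \<or> (x @ us = y \<and> a = us @ b)"
    by (auto simp: append_eq_append_conv2)
  then show ?thesis by (auto simp: prec_iff)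
qed

lemma infsum_lin2:
  fixes u v :: "'a \<Rightarrow> real"
  assumes "u summable_on A" "v summable_on A"
  shows "infsum (\<lambda>t. c1 * u t + c2 * v t) A = c1 * infsum u A + c2 * infsum v A"
proof -
  have "infsum (\<lambda>t. c1 * u t + c2 * v t) A = infsum (\<lambda>t. c1 * u t) A + infsum (\<lambda>t. c2 * v t) A"
    by (rule infsum_add) (use assms summable_on_cmult_right in auto)
  also have "\<dots> = c1 * infsum u A + c2 * infsum v A"
    using assms by (simp add: infsum_cmult_right)
  finally show ?thesis .
qed

locale eqm = params +
  fixes pi0 :: real and sig :: "evidence \<Rightarrow> evidence pmf" and a mu :: "evidence \<Rightarrow> real"
  assumes pi0: "0 < pi0" "pi0 < 1"
  and equil: "equilibrium p q pi0 sig a mu"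
begin

lemma E1: "m \<in> set_pmf (sig e) \<Longrightarrow> prec m e"
  using equil by (auto simp: equilibrium_def)
lemma E2: "m \<in> set_pmf (sig e) \<Longrightarrow> prec m' e \<Longrightarrow> a m' \<le> a m"
  using equil by (auto simp: equilibrium_def)
lemma E3: "a = mu"
  using equil by (auto simp: equilibrium_def)
lemma E4: "m \<in> set_pmf (sig e) \<Longrightarrow> a m = (\<Sum>\<^sub>\<infinity>t\<in>UC m. pmf (sig t) m * FG p q t * pi0) /
               (\<Sum>\<^sub>\<infinity>t\<in>UC m. pmf (sig t) m * (FG p q t * pi0 + FB p q t * (1 - pi0)))"
  using equil unfolding equilibrium_def by blast
lemma E5: "(\<And>m'. prec m' e \<Longrightarrow> a m' \<le> a e) \<Longrightarrow> pmf (sig e) e = 1"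
  using equil unfolding equilibrium_def by blast
lemma E6: "(\<And>e. m \<notin> set_pmf (sig e)) \<Longrightarrow> a m = nu p q pi0 m"
  using equil unfolding equilibrium_def by blast

definition onpath where "onpath m \<longleftrightarrow> (\<exists>e. m \<in> set_pmf (sig e))"

definition Zt where "Zt t = FG p q t * pi0 + FB p q t * (1 - pi0)"
lemma FG_nn[simp]: "0 \<le> FG p q t" using FG_pos less_imp_le by blast
lemma FB_nn[simp]: "0 \<le> FB p q t" using FB_pos less_imp_le by blast
lemma Zt_pos: "0 < Zt t" using FG_pos FB_pos pi0 by (simp add: Zt_def add_pos_pos)
lemma nu_eq: "nu p q pi0 t = FG p q t * pi0 / Zt t" by (simp add: nu_def Zt_def)
lemma nu_pos: "0 < nu p q pi0 t" using FG_pos[of t] pi0 Zt_pos[of t] by (simp add: nu_eq)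
lemma nu_lt1: "nu p q pi0 t < 1"
  using FG_pos[of t] FB_pos[of t] pi0 Zt_pos[of t] by (simp add: nu_eq Zt_def)

definition NG where "NG m = (\<Sum>\<^sub>\<infinity>t\<in>UC m. pmf (sig t) m * FG p q t)"
definition NB where "NB m = (\<Sum>\<^sub>\<infinity>t\<in>UC m. pmf (sig t) m * FB p q t)"

lemma pG_summable: "(\<lambda>t. pmf (sig t) m * FG p q t) summable_on A"
  by (rule summable_on_comparison_test[OF FG_summable])
     (use mult_left_le_one_le[OF FG_nn pmf_nonneg pmf_le_1] in auto)
lemma pB_summable: "(\<lambda>t. pmf (sig t) m * FB p q t) summable_on A"
  by (rule summable_on_comparison_test[OF FB_summable])
     (use mult_left_le_one_le[OF FB_nn pmf_nonneg pmf_le_1] in auto)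

lemma a_onpath:
  assumes "onpath m"
  shows "a m = NG m * pi0 / (NG m * pi0 + NB m * (1 - pi0))"
proof -
  obtain e where e: "m \<in> set_pmf (sig e)" using assms by (auto simp: onpath_def)
  have 1: "(\<Sum>\<^sub>\<infinity>t\<in>UC m. pmf (sig t) m * FG p q t * pi0) = NG m * pi0"
    unfolding NG_def by (subst infsum_cmult_left[symmetric]) (use pG_summable in auto)
  have "(\<Sum>\<^sub>\<infinity>t\<in>UC m. pmf (sig t) m * (FG p q t * pi0 + FB p q t * (1 - pi0)))
      = (\<Sum>\<^sub>\<infinity>t\<in>UC m. pmf (sig t) m * FG p q t * pi0 + pmf (sig t) m * FB p q t * (1 - pi0))"
    by (simp add: algebra_simps)
  also have "\<dots> = (\<Sum>\<^sub>\<infinity>t\<in>UC m. pmf (sig t) m * FG p q t * pi0) + (\<Sum>\<^sub>\<infinity>t\<in>UC m. pmf (sig t) m * FB p q t * (1 - pi0))"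
    by (rule infsum_add) (rule summable_on_cmult_left[OF pG_summable], rule summable_on_cmult_left[OF pB_summable])
  also have "(\<Sum>\<^sub>\<infinity>t\<in>UC m. pmf (sig t) m * FB p q t * (1 - pi0)) = NB m * (1 - pi0)"
    unfolding NB_def by (subst infsum_cmult_left[symmetric]) (use pB_summable in auto)
  finally show ?thesis using E4[OF e] 1 by simp
qed

lemma NG_pos: "onpath m \<Longrightarrow> 0 < NG m"
proof -
  assume "onpath m"
  then obtain e where e: "m \<in> set_pmf (sig e)" by (auto simp: onpath_def)
  have "pmf (sig e) m * FG p q e \<le> NG m" unfolding NG_def
    by (rule infsum_ge_elem) (use pG_summable E1[OF e] in \<open>auto simp: UC_def\<close>)
  moreover have "0 < pmf (sig e) m * FG p q e" using pmf_positive[OF e] FG_pos by simp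
  ultimately show ?thesis by simp
qed

lemma NB_pos: "onpath m \<Longrightarrow> 0 < NB m"
proof -
  assume "onpath m"
  then obtain e where e: "m \<in> set_pmf (sig e)" by (auto simp: onpath_def)
  have "pmf (sig e) m * FB p q e \<le> NB m" unfolding NB_def
    by (rule infsum_ge_elem) (use pB_summable E1[OF e] in \<open>auto simp: UC_def\<close>)
  moreover have "0 < pmf (sig e) m * FB p q e" using pmf_positive[OF e] FB_pos by simp
  ultimately show ?thesis by simp
qed

lemma a_pos: "0 < a m"
proof (cases "onpath m")
  case True then show ?thesis using NG_pos NB_pos pi0 a_onpath
    by (simp add: add_pos_pos)
next
  case False then show ?thesis using E6 nu_pos by (auto simp: onpath_def)
qed

lemma a_lt1: "a m < 1"
proof (cases "onpath m")
  case True then show ?thesis using NG_pos[OF True] NB_pos[OF True] pi0 a_onpath[OF True]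
    by (simp add: divide_less_eq add_pos_pos)
next
  case False then show ?thesis using E6 nu_lt1 by (auto simp: onpath_def)
qed

lemma pool_ratio: "onpath m \<Longrightarrow> NB m * ((1 - pi0) * a m) = NG m * (pi0 * (1 - a m))"
proof -
  assume h: "onpath m"
  have d: "0 < NG m * pi0 + NB m * (1 - pi0)" using NG_pos[OF h] NB_pos[OF h] pi0 by (simp add: add_pos_pos)
  have "a m * (NG m * pi0 + NB m * (1 - pi0)) = NG m * pi0" using a_onpath[OF h] d by simp
  then show ?thesis by (simp add: algebra_simps)
qed

definition M where "M t = Max (a ` {m. prec m t})"

lemma M_ge: "prec m t \<Longrightarrow> a m \<le> M t" unfolding M_def by (rule Max_ge) auto
lemma M_in: "\<exists>m. prec m t \<and> a m = M t"
proof -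
  have "M t \<in> a ` {m. prec m t}" unfolding M_def by (rule Max_in) (simp, use prec_Nil[of t] in blast)
  then show ?thesis by auto
qed
lemma M_pos: "0 < M t" using M_in a_pos by metis
lemma M_lt1: "M t < 1" using M_in a_lt1 by metis
lemma M_mono: "prec y t \<Longrightarrow> M y \<le> M t"
  using M_in[of y] M_ge prec_trans by metis
lemma M_Cons: "M (s # t) = max (a (s # t)) (M t)"
proof -
  have "{m. prec m (s # t)} = insert (s # t) {m. prec m t}" by (auto simp: prec_Cons)
  moreover have "a ` {m. prec m t} \<noteq> {}" using prec_Nil[of t] by blast
  ultimately show ?thesis unfolding M_def by (simp only: image_insert) (subst Max_insert, auto)
qed

lemma F1: "m \<in> set_pmf (sig t) \<Longrightarrow> a m = M t"
  using M_ge[OF E1] M_in[of t] E2 by (metis antisym)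

lemma F2: "m \<in> set_pmf (sig e) \<Longrightarrow> pmf (sig m) m = 1"
  by (rule E5) (meson E1 E2 prec_trans)

lemma F3: "M t \<le> nu p q pi0 t \<Longrightarrow> pmf (sig t) t = 1"
proof (cases "onpath t")
  case True then show ?thesis using F2 by (auto simp: onpath_def)
next
  case False
  assume h: "M t \<le> nu p q pi0 t"
  have "a t = nu p q pi0 t" using E6 False by (auto simp: onpath_def)
  then show ?thesis using h M_ge by (intro E5) force
qed

lemma pmf_sum1: "(\<Sum>m\<in>{m. prec m t}. pmf (sig t) m) = 1"
  by (rule sum_pmf_eq_1) (auto intro: E1)

lemma pmf_only: "pmf (sig t) t = 1 \<Longrightarrow> m \<noteq> t \<Longrightarrow> pmf (sig t) m = 0"
proof -
  assume h: "pmf (sig t) t = 1" "m \<noteq> t"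
  show ?thesis
  proof (cases "prec m t")
    case False then show ?thesis using E1 by (meson pmf_eq_0_set_pmf)
  next
    case True
    let ?A = "{m. prec m t}"
    have "(\<Sum>x\<in>?A. pmf (sig t) x) = pmf (sig t) t + (\<Sum>x\<in>?A - {t}. pmf (sig t) x)"
      by (subst sum.remove[of _ t]) auto
    then have "(\<Sum>x\<in>?A - {t}. pmf (sig t) x) = 0" using pmf_sum1 h by simp
    then have "\<forall>x\<in>?A - {t}. pmf (sig t) x = 0" by (subst (asm) sum_nonneg_eq_0_iff) auto
    then show ?thesis using True h by auto
  qed
qed

lemma F4: assumes "onpath m" shows "a m \<le> nu p q pi0 m"
proof (rule ccontr)
  assume "\<not> a m \<le> nu p q pi0 m"
  then have lt: "nu p q pi0 m < a m" by simp
  obtain e where e: "m \<in> set_pmf (sig e)" using assms by (auto simp: onpath_def)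
  define g where "g t = pmf (sig t) m * (a m * Zt t - FG p q t * pi0)" for t
  have g_nonneg: "0 \<le> g t" if "t \<in> UC m" for t
  proof (cases "m \<in> set_pmf (sig t)")
    case False
    then have "pmf (sig t) m = 0" by (simp add: pmf_eq_0_set_pmf)
    then show ?thesis by (simp add: g_def)
  next
    case True
    have amt: "a m = M t" using F1[OF True] .
    have "nu p q pi0 t < a m"
    proof (cases "t = m")
      case True then show ?thesis using lt by simp
    next
      case False
      show ?thesis
      proof (rule ccontr)
        assume "\<not> nu p q pi0 t < a m"
        then have "pmf (sig t) t = 1" using amt by (intro F3) simp
        then have "pmf (sig t) m = 0" using pmf_only False by metis
        then show False using True by (simp add: pmf_eq_0_set_pmf)
      qed
    qed
    then have "FG p q t * pi0 < a m * Zt t" using Zt_pos[of t] by (simp add: nu_eq divide_less_eq)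
    then show ?thesis by (simp add: g_def)
  qed
  have ge: "g t = (a m * pi0 - pi0) * (pmf (sig t) m * FG p q t) + (a m * (1 - pi0)) * (pmf (sig t) m * FB p q t)" for t
    by (simp add: g_def Zt_def algebra_simps)
  have "infsum g (UC m) = (a m * pi0 - pi0) * NG m + (a m * (1 - pi0)) * NB m"
    unfolding ge NG_def NB_def by (rule infsum_lin2) (rule pG_summable, rule pB_summable)
  also have "\<dots> = a m * (NG m * pi0 + NB m * (1 - pi0)) - NG m * pi0" by (simp add: algebra_simps)
  also have "\<dots> = 0"
  proof -
    have d: "0 < NG m * pi0 + NB m * (1 - pi0)" using NG_pos[OF assms] NB_pos[OF assms] pi0 by (simp add: add_pos_pos)
    show ?thesis using a_onpath[OF assms] d by simp
  qed
  finally have z0: "infsum g (UC m) = 0" .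
  have gs: "g summable_on UC m" unfolding ge
    by (intro summable_on_add summable_on_cmult_right pG_summable pB_summable)
  have em: "e \<in> UC m" using E1[OF e] by (simp add: UC_def)
  have "g e \<le> infsum g (UC m)" by (rule infsum_ge_elem[OF gs g_nonneg em])
  moreover have "0 < g e"
  proof -
    have amt: "a m = M e" using F1[OF e] .
    have "nu p q pi0 e < a m"
    proof (cases "e = m")
      case True then show ?thesis using lt by simp
    next
      case False
      show ?thesis
      proof (rule ccontr)
        assume "\<not> nu p q pi0 e < a m"
        then have "pmf (sig e) e = 1" using amt by (intro F3) simp
        then have "pmf (sig e) m = 0" using pmf_only False by metis
        then show False using e by (simp add: pmf_eq_0_set_pmf)
      qed
    qed
    then have "FG p q e * pi0 < a m * Zt e" using Zt_pos[of e] by (simp add: nu_eq divide_less_eq)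
    then show ?thesis using pmf_positive[OF e] by (simp add: g_def)
  qed
  ultimately show False using z0 by simp
qed

lemma a_min: "a m = min (nu p q pi0 m) (M m)"
proof (cases "onpath m")
  case True
  then obtain e where e: "m \<in> set_pmf (sig e)" by (auto simp: onpath_def)
  have "pmf (sig m) m = 1" using F2[OF e] .
  then have "m \<in> set_pmf (sig m)" by (simp add: set_pmf_iff)
  then have "a m = M m" by (rule F1)
  then show ?thesis using F4[OF True] by simp
next
  case False
  then have "a m = nu p q pi0 m" using E6 by (auto simp: onpath_def)
  then show ?thesis using M_ge[of m m] by simp
qed

end

lemma summable_bound:
  fixes g h :: "'a \<Rightarrow> real"
  assumes "(\<lambda>t. \<bar>g t\<bar>) summable_on A" "\<And>t. t \<in> A \<Longrightarrow> \<bar>h t\<bar> \<le> \<bar>g t\<bar>"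
  shows "h summable_on A"
proof -
  have "(\<lambda>t. norm (h t)) summable_on A"
    by (rule summable_on_comparison_test[OF assms(1)]) (use assms(2) in auto)
  then show ?thesis by (rule abs_summable_summable)
qed

context eqm begin

definition rho :: "real \<Rightarrow> real" where "rho x = pi0 * (1 - x) / ((1 - pi0) * x)"

lemma rho_alt: "0 < x \<Longrightarrow> rho x = pi0 / (1 - pi0) * (1 / x - 1)"
  using pi0 by (simp add: rho_def field_simps)

lemma rho_le_iff: "0 < x \<Longrightarrow> 0 < y \<Longrightarrow> rho x \<le> rho y \<longleftrightarrow> y \<le> x"
proof -
  assume xy: "0 < x" "0 < y"
  define c where "c = pi0 / (1 - pi0)"
  have c: "0 < c" using pi0 by (simp add: c_def)
  have "rho x \<le> rho y \<longleftrightarrow> c * (1/x - 1) \<le> c * (1/y - 1)"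
    using xy by (simp only: rho_alt c_def)
  also have "\<dots> \<longleftrightarrow> 1/x - 1 \<le> 1/y - 1" by (rule mult_le_cancel_left_pos[OF c])
  also have "\<dots> \<longleftrightarrow> inverse x \<le> inverse y" by (simp add: inverse_eq_divide)
  also have "\<dots> \<longleftrightarrow> y \<le> x" using xy by (rule inverse_le_iff_le)
  finally show ?thesis .
qed

lemma rho_less_iff: "0 < x \<Longrightarrow> 0 < y \<Longrightarrow> rho x < rho y \<longleftrightarrow> y < x"
  using rho_le_iff by (meson linorder_not_le)

lemma rho_pos: "0 < x \<Longrightarrow> x < 1 \<Longrightarrow> 0 < rho x"
  using pi0 by (simp add: rho_def)

lemma rho_nu: "rho (nu p q pi0 t) = FB p q t / FG p q t"
proof -
  have Z: "0 < Zt t" by (rule Zt_pos)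
  have n1: "1 - nu p q pi0 t = FB p q t * (1 - pi0) / Zt t" using Z by (simp add: nu_eq Zt_def field_simps)
  have "rho (nu p q pi0 t) = pi0 * (FB p q t * (1 - pi0) / Zt t) / ((1 - pi0) * (FG p q t * pi0 / Zt t))"
    apply (subst rho_def) apply (subst n1) apply (subst nu_eq) ..
  also have "\<dots> = FB p q t / FG p q t" using Z pi0 FG_pos[of t] by (simp add: field_simps)
  finally show ?thesis .
qed

definition f where "f t = rho (M t)"
lemma f_pos: "0 < f t" using M_pos M_lt1 rho_pos by (simp add: f_def)
lemma f_mono: "prec y t \<Longrightarrow> f t \<le> f y"
  using M_mono[of y t] M_pos by (simp add: f_def rho_le_iff)
lemma f_le0: "f t \<le> f []" using f_mono[of "[]" t] by simp

definition phi where "phi t = FB p q t - f t * FG p q t"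

lemma phi_le0_iff: "phi t \<le> 0 \<longleftrightarrow> M t \<le> nu p q pi0 t"
proof -
  have "phi t \<le> 0 \<longleftrightarrow> FB p q t / FG p q t \<le> f t" using FG_pos[of t] by (simp add: phi_def divide_le_eq)
  also have "\<dots> \<longleftrightarrow> rho (nu p q pi0 t) \<le> rho (M t)" by (simp add: rho_nu f_def)
  also have "\<dots> \<longleftrightarrow> M t \<le> nu p q pi0 t" using nu_pos M_pos by (simp add: rho_le_iff)
  finally show ?thesis .
qed

lemma phi_le0_self: "phi t \<le> 0 \<Longrightarrow> pmf (sig t) t = 1"
  using phi_le0_iff F3 by blast

lemma pool_zero: "(\<Sum>\<^sub>\<infinity>t\<in>UC m. pmf (sig t) m * phi t) = 0"
proof (cases "onpath m")
  case True
  have e: "pmf (sig t) m * phi t = 1 * (pmf (sig t) m * FB p q t) + (- rho (a m)) * (pmf (sig t) m * FG p q t)" for t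
  proof (cases "m \<in> set_pmf (sig t)")
    case True
    then have "f t = rho (a m)" using F1 by (simp add: f_def)
    then show ?thesis by (simp add: phi_def algebra_simps)
  next
    case False
    then have "pmf (sig t) m = 0" by (simp add: pmf_eq_0_set_pmf)
    then show ?thesis by simp
  qed
  have "(\<Sum>\<^sub>\<infinity>t\<in>UC m. pmf (sig t) m * phi t) = 1 * NB m + (- rho (a m)) * NG m"
    unfolding e NB_def NG_def by (rule infsum_lin2) (rule pB_summable, rule pG_summable)
  also have "\<dots> = 0"
  proof -
    have "NB m * ((1 - pi0) * a m) = NG m * (pi0 * (1 - a m))" by (rule pool_ratio[OF True])
    then have "NB m = NG m * rho (a m)" using a_pos[of m] pi0 by (simp add: rho_def field_simps)
    then show ?thesis by simp
  qed
  finally show ?thesis .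
next
  case False
  then have "\<And>t. pmf (sig t) m = 0" by (auto simp: onpath_def pmf_eq_0_set_pmf)
  then show ?thesis by simp
qed

lemma phi_abs_le: "\<bar>phi t\<bar> \<le> FB p q t + f [] * FG p q t"
proof -
  have "0 \<le> f t * FG p q t" using f_pos[of t] by simp
  moreover have "f t * FG p q t \<le> f [] * FG p q t" using f_le0[of t] by (simp add: mult_right_mono)
  moreover have "0 \<le> FB p q t" by simp
  ultimately show ?thesis unfolding phi_def abs_le_iff by linarith
qed

lemma phi_abs_summable: "(\<lambda>t. \<bar>phi t\<bar>) summable_on A"
proof (rule summable_on_comparison_test)
  show "(\<lambda>t. FB p q t + f [] * FG p q t) summable_on A"
    by (intro summable_on_add summable_on_cmult_right FB_summable FG_summable)
qed (use phi_abs_le in auto)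

lemma phi_summable: "phi summable_on A"
  by (rule summable_bound[OF phi_abs_summable]) simp

definition Y where "Y t = infsum phi (UU t)"

lemma UU_split: "UU t = insert t (UU (sg # t) \<union> UU (sb # t))"
proof
  show "UU t \<subseteq> insert t (UU (sg # t) \<union> UU (sb # t))"
  proof
    fix u assume "u \<in> UU t"
    then obtain x where u: "u = x @ t" by (auto simp: UU_def prec_iff)
    show "u \<in> insert t (UU (sg # t) \<union> UU (sb # t))"
    proof (cases x rule: rev_exhaust)
      case Nil then show ?thesis using u by simp
    next
      case (snoc ys s)
      then have "u = ys @ (s # t)" using u by simp
      then show ?thesis by (cases s) (auto simp: UU_def prec_iff)
    qed
  qed
  show "insert t (UU (sg # t) \<union> UU (sb # t)) \<subseteq> UU t"
    by (auto simp: UU_def intro: prec_Cons_self)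
qed

lemma UU_disj: "t \<notin> UU (sg # t) \<union> UU (sb # t)" "UU (sg # t) \<inter> UU (sb # t) = {}"
proof -
  show "t \<notin> UU (sg # t) \<union> UU (sb # t)" using not_prec_Cons by (auto simp: UU_def)
  show "UU (sg # t) \<inter> UU (sb # t) = {}"
  proof (rule ccontr)
    assume "UU (sg # t) \<inter> UU (sb # t) \<noteq> {}"
    then obtain u x y where "u = x @ (sg # t)" "u = y @ (sb # t)" by (auto simp: UU_def prec_iff)
    then have "x @ (sg # t) = y @ (sb # t)" by simp
    then show False by (subst (asm) append_eq_append_conv) auto
  qed
qed

lemma Y_rec: "Y t = phi t + Y (sg # t) + Y (sb # t)"
proof -
  have "Y t = phi t + infsum phi (UU (sg # t) \<union> UU (sb # t))"
    unfolding Y_def by (subst UU_split, rule infsum_insert) (use phi_summable UU_disj in auto)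
  also have "infsum phi (UU (sg # t) \<union> UU (sb # t)) = Y (sg # t) + Y (sb # t)"
    unfolding Y_def by (rule infsum_Un_disjoint) (use phi_summable UU_disj in auto)
  finally show ?thesis by simp
qed

lemma Y_ub: "Y t \<le> S * FB p q t"
proof -
  have "Y t \<le> infsum (FB p q) (UU t)" unfolding Y_def
    by (rule infsum_mono) (use phi_summable FB_summable mult_nonneg_nonneg[OF less_imp_le[OF f_pos] FG_nn] in \<open>auto simp: phi_def\<close>)
  also have "\<dots> \<le> S * FB p q t" by (rule FB_UU)
  finally show ?thesis .
qed

definition In where "In e t = {m. prec m t \<and> prec e m}"
lemma In_fin: "finite (In e t)"
  by (rule finite_subset[OF _ finite_suffixes[of t]]) (auto simp: In_def)
definition outp where "outp e t = 1 - (\<Sum>m\<in>In e t. pmf (sig t) m)"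

lemma In_le1: "(\<Sum>m\<in>In e t. pmf (sig t) m) \<le> 1"
proof -
  have "(\<Sum>m\<in>In e t. pmf (sig t) m) \<le> (\<Sum>m\<in>{m. prec m t}. pmf (sig t) m)"
    by (rule sum_mono2) (auto simp: In_def)
  then show ?thesis using pmf_sum1 by simp
qed

lemma outp_ge0: "0 \<le> outp e t" using In_le1 by (simp add: outp_def)
lemma outp_le1: "outp e t \<le> 1" by (simp add: outp_def sum_nonneg)

lemma phi_out_nn: assumes "prec e t" shows "0 \<le> phi t * outp e t"
proof (cases "phi t \<le> 0")
  case True
  then have p1: "pmf (sig t) t = 1" by (rule phi_le0_self)
  have "t \<in> In e t" using assms by (simp add: In_def)
  then have "pmf (sig t) t \<le> (\<Sum>m\<in>In e t. pmf (sig t) m)"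
    by (intro member_le_sum) (auto simp: In_fin)
  then have "outp e t = 0" using In_le1[where e=e and t=t] p1 by (simp add: outp_def)
  then show ?thesis by simp
next
  case False then show ?thesis using outp_ge0 by simp
qed

lemma swap0: "(\<Sum>\<^sub>\<infinity>t\<in>UU e. \<Sum>m\<in>In e t. pmf (sig t) m * phi t) = 0"
proof -
  define P where "P = Sigma (UU e) (In e)"
  define P' where "P' = Sigma (UU e) UC"
  define G where "G = (\<lambda>(t, m). pmf (sig t) m * phi t)"
  define G' where "G' = (\<lambda>(m, t). pmf (sig t) m * phi t)"
  have absP: "(\<lambda>x. norm (G x)) summable_on P"
    unfolding P_def
  proof (rule summable_on_SigmaI)
    show "((\<lambda>m. norm (G (t, m))) has_sum (\<Sum>m\<in>In e t. norm (G (t, m)))) (In e t)" for t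
      using In_fin by (intro has_sum_finiteI) auto
    show "(\<lambda>t. \<Sum>m\<in>In e t. norm (G (t, m))) summable_on UU e"
    proof (rule summable_on_comparison_test[OF phi_abs_summable])
      fix t
      have "(\<Sum>m\<in>In e t. norm (G (t, m))) = (\<Sum>m\<in>In e t. pmf (sig t) m) * \<bar>phi t\<bar>"
        by (simp add: G_def abs_mult sum_distrib_right)
      also have "\<dots> \<le> 1 * \<bar>phi t\<bar>" using In_le1 by (intro mult_right_mono) auto
      finally show "(\<Sum>m\<in>In e t. norm (G (t, m))) \<le> \<bar>phi t\<bar>" by simp
      show "0 \<le> (\<Sum>m\<in>In e t. norm (G (t, m)))" by (simp add: sum_nonneg)
    qed
  qed auto
  have sP: "G summable_on P" by (rule abs_summable_summable[OF absP])
  have bij: "bij_betw prod.swap P P'"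
    by (rule bij_betwI[where g = prod.swap]) (auto simp: P_def P'_def UU_def UC_def In_def intro: prec_trans)
  have GG: "(\<lambda>x. G' (prod.swap x)) = G" by (auto simp: G_def G'_def)
  have sP': "G' summable_on P'" using summable_on_reindex_bij_betw[OF bij, of G'] sP GG by simp
  have "(\<Sum>\<^sub>\<infinity>t\<in>UU e. \<Sum>m\<in>In e t. pmf (sig t) m * phi t) = (\<Sum>\<^sub>\<infinity>t\<in>UU e. \<Sum>\<^sub>\<infinity>m\<in>In e t. pmf (sig t) m * phi t)"
    using In_fin by simp
  also have "\<dots> = infsum G P"
    using infsum_Sigma'_banach[of "\<lambda>t m. pmf (sig t) m * phi t" "UU e" "In e"] sP
    by (simp add: P_def G_def)
  also have "\<dots> = infsum G' P'" using infsum_reindex_bij_betw[OF bij, of G'] GG by simp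
  also have "\<dots> = (\<Sum>\<^sub>\<infinity>m\<in>UU e. \<Sum>\<^sub>\<infinity>t\<in>UC m. pmf (sig t) m * phi t)"
    using infsum_Sigma'_banach[of "\<lambda>m t. pmf (sig t) m * phi t" "UU e" UC] sP'
    by (simp add: P'_def G'_def)
  also have "\<dots> = 0" by (simp add: pool_zero)
  finally show ?thesis .
qed

lemma out_summable: "(\<lambda>t. phi t * outp e t) summable_on A"
  by (rule summable_bound[OF phi_abs_summable]) (use outp_ge0 outp_le1 in \<open>auto simp: abs_mult intro: mult_right_le_one_le\<close>)

lemma Y_out: "Y e = (\<Sum>\<^sub>\<infinity>t\<in>UU e. phi t * outp e t)"
proof -
  have d: "phi t = (\<Sum>m\<in>In e t. pmf (sig t) m * phi t) + phi t * outp e t" for t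
    by (simp add: outp_def sum_distrib_right[symmetric] algebra_simps)
  have s1: "(\<lambda>t. \<Sum>m\<in>In e t. pmf (sig t) m * phi t) summable_on UU e"
  proof (rule summable_bound[OF phi_abs_summable])
    fix t
    have "\<bar>\<Sum>m\<in>In e t. pmf (sig t) m * phi t\<bar> = (\<Sum>m\<in>In e t. pmf (sig t) m) * \<bar>phi t\<bar>"
      by (simp add: sum_distrib_right[symmetric] abs_mult sum_nonneg)
    also have "\<dots> \<le> 1 * \<bar>phi t\<bar>" using In_le1 by (intro mult_right_mono) auto
    finally show "\<bar>\<Sum>m\<in>In e t. pmf (sig t) m * phi t\<bar> \<le> \<bar>phi t\<bar>" by simp
  qed
  have "Y e = (\<Sum>\<^sub>\<infinity>t\<in>UU e. (\<Sum>m\<in>In e t. pmf (sig t) m * phi t) + phi t * outp e t)"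
    unfolding Y_def by (rule infsum_cong) (rule d)
  also have "\<dots> = (\<Sum>\<^sub>\<infinity>t\<in>UU e. \<Sum>m\<in>In e t. pmf (sig t) m * phi t) + (\<Sum>\<^sub>\<infinity>t\<in>UU e. phi t * outp e t)"
    by (rule infsum_add[OF s1 out_summable])
  finally show ?thesis using swap0 by simp
qed

lemma Y_nonneg: "0 \<le> Y e"
  unfolding Y_out by (rule infsum_nonneg) (auto simp: UU_def intro: phi_out_nn)

lemma Y_ge: "prec e t \<Longrightarrow> phi t * outp e t \<le> Y e"
  unfolding Y_out by (rule infsum_ge_elem[OF out_summable]) (auto simp: UU_def intro: phi_out_nn)

definition root where "root e \<longleftrightarrow> e = [] \<or> M (tl e) < M e"

lemma Y_root: assumes "root e" shows "Y e = 0"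
proof -
  have "outp e t = 0" if t: "prec e t" for t
  proof -
    have "set_pmf (sig t) \<subseteq> In e t"
    proof
      fix m assume m: "m \<in> set_pmf (sig t)"
      have mt: "prec m t" using E1[OF m] .
      have "prec e m"
      proof (cases "e = []")
        case True then show ?thesis by simp
      next
        case False
        then obtain s e' where e: "e = s # e'" by (cases e) auto
        have lt: "M e' < M e" using assms False e by (simp add: root_def)
        show ?thesis
        proof (rule ccontr)
          assume ne: "\<not> prec e m"
          then have "prec m e" using suffix_total[OF mt t] by blast
          then have "prec m e'" using ne e prec_Cons by auto
          then have "M m \<le> M e'" by (rule M_mono)
          moreover have "a m \<le> M m" by (rule M_ge) simp
          moreover have "a m = M t" by (rule F1[OF m])
          moreover have "M e \<le> M t" by (rule M_mono[OF t])
          ultimately show False using lt by linarith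
        qed
      qed
      then show "m \<in> In e t" using mt by (simp add: In_def)
    qed
    then have "(\<Sum>m\<in>In e t. pmf (sig t) m) = 1" by (rule sum_pmf_eq_1[OF In_fin])
    then show ?thesis by (simp add: outp_def)
  qed
  then have "(\<Sum>\<^sub>\<infinity>t\<in>UU e. phi t * outp e t) = (\<Sum>\<^sub>\<infinity>t\<in>UU e. 0)"
    by (intro infsum_cong) (simp add: UU_def)
  then show ?thesis unfolding Y_out by simp
qed

end

fun LS :: "nat \<Rightarrow> (evidence \<Rightarrow> real) \<Rightarrow> evidence \<Rightarrow> real" where
  "LS 0 g t = g t"
| "LS (Suc n) g t = LS n g (sg # t) + LS n g (sb # t)"

definition PS :: "nat \<Rightarrow> (evidence \<Rightarrow> real) \<Rightarrow> evidence \<Rightarrow> real" where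
  "PS n c t = (\<Sum>k<n. LS k c t)"

lemma LS_add: "LS n (\<lambda>u. g u + h u) t = LS n g t + LS n h t"
  by (induction n arbitrary: t) auto
lemma LS_diff: "LS n (\<lambda>u. g u - h u) t = LS n g t - LS n h t"
  by (induction n arbitrary: t) auto
lemma LS_cmult: "LS n (\<lambda>u. c * g u) t = c * LS n g t"
  by (induction n arbitrary: t) (auto simp: algebra_simps)
lemma LS_zero: "LS n (\<lambda>u. 0) t = 0"
  by (induction n arbitrary: t) auto

lemma LS_mono: "(\<And>u. prec t u \<Longrightarrow> g u \<le> h u) \<Longrightarrow> LS n g t \<le> LS n h t"
proof (induction n arbitrary: t)
  case 0 then show ?case by simp
next
  case (Suc n)
  have "LS n g (sg # t) \<le> LS n h (sg # t)" by (rule Suc.IH) (use Suc.prems prec_Cons_self in blast)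
  moreover have "LS n g (sb # t) \<le> LS n h (sb # t)" by (rule Suc.IH) (use Suc.prems prec_Cons_self in blast)
  ultimately show ?case by simp
qed

lemma LS_sub: "(\<And>u. prec t u \<Longrightarrow> g u \<le> g (sg # u) + g (sb # u)) \<Longrightarrow> g t \<le> LS n g t"
proof (induction n arbitrary: t)
  case 0 then show ?case by simp
next
  case (Suc n)
  have "g (sg # t) \<le> LS n g (sg # t)" by (rule Suc.IH) (use Suc.prems prec_Cons_self in blast)
  moreover have "g (sb # t) \<le> LS n g (sb # t)" by (rule Suc.IH) (use Suc.prems prec_Cons_self in blast)
  moreover have "g t \<le> g (sg # t) + g (sb # t)" using Suc.prems by simp
  ultimately show ?case by simp
qed

lemma PS_Suc: "PS (Suc n) c t = c t + PS n c (sg # t) + PS n c (sb # t)"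
proof -
  have "PS (Suc n) c t = LS 0 c t + (\<Sum>k<n. LS (Suc k) c t)"
    unfolding PS_def by (subst sum.lessThan_Suc_shift) simp
  also have "(\<Sum>k<n. LS (Suc k) c t) = PS n c (sg # t) + PS n c (sb # t)"
    by (simp add: PS_def sum.distrib)
  finally show ?thesis by simp
qed

lemma telescope: "(\<And>u. prec t u \<Longrightarrow> g u = c u + g (sg # u) + g (sb # u)) \<Longrightarrow> g t = PS n c t + LS n g t"
proof (induction n arbitrary: t)
  case 0 then show ?case by (simp add: PS_def)
next
  case (Suc n)
  have "g (sg # t) = PS n c (sg # t) + LS n g (sg # t)" by (rule Suc.IH) (use Suc.prems prec_Cons_self in blast)
  moreover have "g (sb # t) = PS n c (sb # t) + LS n g (sb # t)" by (rule Suc.IH) (use Suc.prems prec_Cons_self in blast)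
  moreover have "g t = c t + g (sg # t) + g (sb # t)" using Suc.prems by simp
  ultimately show ?case by (simp add: PS_Suc)
qed

lemma PS_mono: "(\<And>u. prec t u \<Longrightarrow> c u \<le> d u) \<Longrightarrow> PS n c t \<le> PS n d t"
  unfolding PS_def by (intro sum_mono LS_mono) auto

context params begin

lemma LS_FG: "LS n (FG p q) t = (p+q)^n * FG p q t"
  by (induction n arbitrary: t) (auto simp: algebra_simps)
lemma LS_FB: "LS n (FB p q) t = (p+q)^n * FB p q t"
  by (induction n arbitrary: t) (auto simp: algebra_simps)

lemma pow_small: "0 < eps \<Longrightarrow> \<exists>n. (p+q)^n < eps"
  using real_arch_pow_inv pq1 by blast

lemma kappa_ex: assumes "0 < th" shows "\<exists>k. th \<le> K * z powi k \<and> K * z powi (k+1) < th"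
proof -
  have lz: "ln z < 0" using z_pos z_lt1 by (simp add: ln_less_zero)
  define c0 where "c0 = ln (th / K) / ln z"
  define k where "k = floor c0"
  have zi: "z powi i = exp (of_int i * ln z)" for i
    using z_pos powr_real_of_int'[of z i] by (simp add: powr_def)
  have thK: "0 < th / K" using assms K_pos by simp
  have "of_int k \<le> c0" by (simp add: k_def)
  then have "c0 * ln z \<le> of_int k * ln z" using lz by (simp add: mult_right_mono_neg)
  moreover have "c0 * ln z = ln (th / K)" using lz by (simp add: c0_def)
  ultimately have "ln (th / K) \<le> of_int k * ln z" by simp
  then have "th / K \<le> z powi k" unfolding zi using thK by (metis exp_le_cancel_iff exp_ln)
  then have 1: "th \<le> K * z powi k" using K_pos by (simp add: field_simps)
  have "c0 < of_int (k + 1)" by (simp add: k_def)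
  then have "of_int (k+1) * ln z < c0 * ln z" using lz by (simp add: mult_strict_right_mono_neg)
  then have "of_int (k+1) * ln z < ln (th / K)" using lz by (simp add: c0_def)
  then have "z powi (k+1) < th / K" unfolding zi using thK by (metis exp_less_cancel_iff exp_ln)
  then have 2: "K * z powi (k+1) < th" using K_pos by (simp add: field_simps)
  from 1 2 show ?thesis by blast
qed

end

context eqm begin

lemma Y_tele: "Y t = PS n phi t + LS n Y t"
  by (rule telescope) (rule Y_rec)

lemma root_of_lt: "f (s # u) < f u \<Longrightarrow> root (s # u)"
  using M_pos by (simp add: root_def f_def rho_less_iff)

lemma f_le_K: "f e \<le> K * z powi (Dd e)"
proof (rule ccontr)
  assume "\<not> f e \<le> K * z powi (Dd e)"
  then have big: "K * z powi (Dd e) < f e" by simp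
  define th where "th = f e"
  have th_pos: "0 < th" using f_pos by (simp add: th_def)
  obtain k where k1: "th \<le> K * z powi k" and k2: "K * z powi (k+1) < th"
    using kappa_ex[OF th_pos] by blast
  interpret T: tpot p q th k
    by unfold_locales (use q_pos qp p1 pq1 th_pos k1 k2 in auto)
  define R where "R u \<longleftrightarrow> prec e u \<and> f u = th" for u
  define Pot where "Pot u = FG p q u * T.Tf (Dd u)" for u
  define g where "g u = (if R u then Y u - Pot u else 0)" for u
  have child: "Y (s # u) = (if R (s # u) then g (s # u) + Pot (s # u) else 0) \<and> (\<not> R (s # u) \<longrightarrow> g (s # u) = 0)"
    if u: "prec e u" "f u = th" for s u
  proof (cases "R (s # u)")
    case True then show ?thesis by (simp add: g_def)
  next
    case False
    have "prec e (s # u)" using u by (auto simp: prec_iff intro: exI[of _ "s # _"])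
    then have "f (s # u) \<noteq> th" using False by (simp add: R_def)
    moreover have "f (s # u) \<le> f u" using f_mono[of u "s # u"] by (simp add: prec_Cons)
    ultimately have "f (s # u) < f u" using u by simp
    then have "root (s # u)" by (rule root_of_lt)
    then have "Y (s # u) = 0" by (rule Y_root)
    then show ?thesis using False by (simp add: g_def)
  qed
  have sub: "g u \<le> g (sg # u) + g (sb # u)" if pu: "prec e u" for u
  proof (cases "R u")
    case True
    then have fu: "f u = th" by (simp add: R_def)
    define D where "D = Dd u"
    have phiu: "phi u = FG p q u * (z powi D - th)"
      by (simp add: phi_def fu FB_FG D_def algebra_simps)
    have Pg: "Pot (sg # u) = FG p q u * (p * T.Tf (D + 1))" by (simp add: Pot_def D_def mult_ac)
    have Pb: "Pot (sb # u) = FG p q u * (q * T.Tf (D - 1))" by (simp add: Pot_def D_def mult_ac)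
    have cg: "Y (sg # u) = (if R (sg # u) then g (sg # u) + Pot (sg # u) else 0)"
      and cg0: "\<not> R (sg # u) \<longrightarrow> g (sg # u) = 0" using child[OF pu fu, of sg] by auto
    have cb: "Y (sb # u) = (if R (sb # u) then g (sb # u) + Pot (sb # u) else 0)"
      and cb0: "\<not> R (sb # u) \<longrightarrow> g (sb # u) = 0" using child[OF pu fu, of sb] by auto
    have node: "(z powi D - th) + (if R (sg # u) then p * T.Tf (D+1) else 0) + (if R (sb # u) then q * T.Tf (D-1) else 0) \<le> T.Tf D"
      by (rule T.T_node)
    have "g u = phi u + Y (sg # u) + Y (sb # u) - Pot u" using True Y_rec[of u] by (simp add: g_def)
    also have "\<dots> = (if R (sg # u) then g (sg # u) else 0) + (if R (sb # u) then g (sb # u) else 0)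
        + FG p q u * ((z powi D - th) + (if R (sg # u) then p * T.Tf (D+1) else 0) + (if R (sb # u) then q * T.Tf (D-1) else 0) - T.Tf D)"
      unfolding cg cb phiu Pg Pb by (simp add: Pot_def D_def algebra_simps)
    also have "\<dots> \<le> (if R (sg # u) then g (sg # u) else 0) + (if R (sb # u) then g (sb # u) else 0) + FG p q u * 0"
      using node FG_pos[of u] by (intro add_left_mono mult_left_mono) auto
    also have "\<dots> = g (sg # u) + g (sb # u)" using cg0 cb0 by auto
    finally show ?thesis .
  next
    case False
    then have "f u \<noteq> th" using pu by (simp add: R_def)
    moreover have "f u \<le> th" using f_mono[OF pu] by (simp add: th_def)
    ultimately have lt: "f u < th" by simp
    have "\<not> R (s # u)" for s
    proof -
      have "f (s # u) \<le> f u" using f_mono[of u "s # u"] by (simp add: prec_Cons)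
      then show ?thesis using lt by (simp add: R_def)
    qed
    then show ?thesis using False by (simp add: g_def)
  qed
  have gle: "g e \<le> LS n g e" for n by (rule LS_sub) (rule sub)
  have gb: "g u \<le> S * FB p q u + th * FG p q u" if "prec e u" for u
  proof (cases "R u")
    case True
    have "Y u \<le> S * FB p q u" by (rule Y_ub)
    moreover have "- Pot u \<le> FG p q u * th"
      using mult_left_mono[OF T.T4[of "Dd u"] less_imp_le[OF FG_pos[of u]]] by (simp add: Pot_def)
    ultimately show ?thesis using True by (simp add: g_def mult.commute)
  next
    case False
    then show ?thesis using FB_pos[of u] FG_pos[of u] th_pos S_pos by (simp add: g_def add_nonneg_nonneg)
  qed
  have LSb: "LS n g e \<le> (p+q)^n * (S * FB p q e + th * FG p q e)" for n
  proof -
    have "LS n g e \<le> LS n (\<lambda>u. S * FB p q u + th * FG p q u) e" by (rule LS_mono) (rule gb)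
    also have "\<dots> = (p+q)^n * (S * FB p q e + th * FG p q e)"
      by (simp add: LS_add LS_cmult LS_FB LS_FG algebra_simps)
    finally show ?thesis .
  qed
  have De: "k < Dd e"
  proof (rule ccontr)
    assume "\<not> k < Dd e"
    then have "z powi k \<le> z powi (Dd e)" using z_pos z_lt1 by (intro power_int_decreasing) auto
    then have "K * z powi k \<le> K * z powi (Dd e)" using K_pos by simp
    then show False using k1 big th_def by simp
  qed
  have Tneg: "T.Tf (Dd e) < 0" by (rule T.T2[OF De])
  have "R e" by (simp add: R_def th_def)
  then have ge: "- Pot e \<le> g e" using Y_nonneg[of e] by (simp add: g_def)
  have pos: "0 < - Pot e" using Tneg FG_pos[of e] by (simp add: Pot_def mult_pos_neg)
  have "0 < S * FB p q e + th * FG p q e" using S_pos FB_pos th_pos FG_pos by (simp add: add_pos_pos)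
  moreover have "0 < (- Pot e) / (S * FB p q e + th * FG p q e)"
    using pos \<open>0 < S * FB p q e + th * FG p q e\<close> by (rule divide_pos_pos)
  ultimately obtain n where n: "(p+q)^n < (- Pot e) / (S * FB p q e + th * FG p q e)"
    using pow_small by blast
  then have "(p+q)^n * (S * FB p q e + th * FG p q e) < - Pot e"
    using \<open>0 < S * FB p q e + th * FG p q e\<close> n by (metis pos_less_divide_eq)
  then show False using gle[of n] LSb[of n] ge by linarith
qed

end

context params begin

lemma nstar_eq: "nstar p q = log (p/q) K"
proof -
  have c: "0 < (p - al) / (q - al)" using al_lt_q al_lt_p by simp
  have b: "0 < p/q" "p/q \<noteq> 1" using p_pos q_pos qp by auto
  have "log (p/q) K = log (p/q) ((p - al) / (q - al)) + log (p/q) z"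
    unfolding K_def using c z_pos by (rule log_mult_pos)
  also have "log (p/q) z = -1"
  proof -
    have zi: "z = inverse (p/q)" by (simp add: z_def)
    have "log (p/q) (inverse (p/q)) = - log (p/q) (p/q)" by (rule log_inverse)
    moreover have "log (p/q) (p/q) = 1" using b by (intro log_eq_one) auto
    ultimately show ?thesis by (simp only: zi)
  qed
  finally show ?thesis by (simp add: nstar_def al_def)
qed

lemma nstar_pos: "0 < nstar p q"
proof -
  have "1 < p/q" using q_pos qp by simp
  then show ?thesis using K_gt1 K_pos by (simp add: nstar_eq)
qed

lemma crit_pow: "z powi d \<le> K * z powi n \<longleftrightarrow> real_of_int n - nstar p q \<le> real_of_int d"
proof -
  have b: "1 < p/q" using q_pos qp by simp
  have "z powi d \<le> K * z powi n \<longleftrightarrow> z powi d / z powi n \<le> K"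
    using z_pos by (simp add: pos_divide_le_eq)
  also have "z powi d / z powi n = (p/q) powi (n - d)"
  proof -
    have zi: "z = inverse (p/q)" by (simp add: z_def)
    have A: "z powi d / z powi n = z powi (d - n)" using z_pos by (simp add: power_int_diff)
    have B: "z powi (d - n) = inverse ((p/q) powi (d - n))" unfolding zi by (rule power_int_inverse)
    have C: "inverse ((p/q) powi (d - n)) = (p/q) powi (n - d)" using power_int_minus[of "p/q" "d - n"] by simp
    from A B C show ?thesis by simp
  qed
  also have "(p/q) powi (n - d) = (p/q) powr (real_of_int (n - d))"
    using b p_pos q_pos powr_real_of_int'[of "p/q" "n - d"] by simp
  also have "(p/q) powr (real_of_int (n - d)) \<le> K \<longleftrightarrow> real_of_int (n - d) \<le> log (p/q) K"
    using b K_pos by (simp add: le_log_iff)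
  finally show ?thesis by (simp add: nstar_eq) linarith
qed

end

context eqm begin

lemma f_le_KN: "f t \<le> K * z powi (Nm t)"
proof -
  obtain y where y: "prec y t" "Dd y = Nm t" using Nm_attained by blast
  have "f t \<le> f y" by (rule f_mono[OF y(1)])
  also have "\<dots> \<le> K * z powi (Dd y)" by (rule f_le_K)
  finally show ?thesis using y by simp
qed

definition Psi where "Psi u = S * FB p q u"
definition Phi where "Phi u = S * FG p q u * phi2 (Dd u) (Nm u)"
definition chi where "chi u = FB p q u - FG p q u * (K * z powi (Nm u))"

lemma Psi_rec: "Psi u = FB p q u + Psi (sg # u) + Psi (sb # u)"
proof -
  have "S * FB p q u = FB p q u * (S * (1 - p - q)) + S * q * FB p q u + S * p * FB p q u"
    by (simp add: algebra_simps)
  then show ?thesis using S_eq by (simp add: Psi_def mult_ac)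
qed

lemma Phi_rec: "Phi u = FG p q u * (K * z powi (Nm u)) + Phi (sg # u) + Phi (sb # u)"
proof -
  have r: "S * phi2 (Dd u) (Nm u) = K * z powi (Nm u) + S * p * phi2 (Dd u + 1) (max (Nm u) (Dd u + 1))
           + S * q * phi2 (Dd u - 1) (Nm u)"
    by (rule phi2_rec[OF Dd_le_Nm])
  have "Phi u = FG p q u * (S * phi2 (Dd u) (Nm u))" by (simp add: Phi_def mult_ac)
  also have "\<dots> = FG p q u * (K * z powi (Nm u)) + FG p q u * (S * p * phi2 (Dd u + 1) (max (Nm u) (Dd u + 1)))
           + FG p q u * (S * q * phi2 (Dd u - 1) (Nm u))" unfolding r by (simp add: algebra_simps)
  also have "FG p q u * (S * p * phi2 (Dd u + 1) (max (Nm u) (Dd u + 1))) = Phi (sg # u)"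
    by (simp add: Phi_def Nm_Cons_sg mult_ac)
  also have "FG p q u * (S * q * phi2 (Dd u - 1) (Nm u)) = Phi (sb # u)"
    by (simp add: Phi_def Nm_Cons_sb mult_ac)
  finally show ?thesis .
qed

lemma Phi_nonneg: "0 \<le> Phi u"
  using S_pos FG_pos[of u] phi2_nonneg[of "Dd u" "Nm u"] by (simp add: Phi_def)

lemma Phi_le_Psi: "Phi u \<le> Psi u"
proof -
  have "phi2 (Dd u) (Nm u) \<le> z powi (Dd u)" by (rule phi2_le[OF Dd_le_Nm])
  then have "S * FG p q u * phi2 (Dd u) (Nm u) \<le> S * FG p q u * z powi (Dd u)"
    using S_pos FG_pos[of u] by (intro mult_left_mono) auto
  then show ?thesis by (simp add: Phi_def Psi_def FB_FG mult_ac)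
qed

lemma W_tele: "Psi y - Phi y = PS n chi y + LS n (\<lambda>u. Psi u - Phi u) y"
proof (rule telescope)
  fix u
  show "Psi u - Phi u = chi u + (Psi (sg # u) - Phi (sg # u)) + (Psi (sb # u) - Phi (sb # u))"
    using Psi_rec[of u] Phi_rec[of u] by (simp add: chi_def algebra_simps)
qed

lemma LS_Psi: "LS n Psi y = S * (p+q)^n * FB p q y"
proof -
  have "Psi = (\<lambda>u. S * FB p q u)" by (rule ext) (simp add: Psi_def)
  then have "LS n Psi y = LS n (\<lambda>u. S * FB p q u) y" by simp
  also have "\<dots> = S * (p+q)^n * FB p q y" by (simp add: LS_cmult LS_FB)
  finally show ?thesis .
qed

lemma PS_chi_lb: "- (S * (p+q)^n * FB p q y) \<le> PS n chi y"
proof -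
  have "LS n (\<lambda>u. Psi u - Phi u) y \<le> LS n Psi y"
    by (rule LS_mono) (use Phi_nonneg in auto)
  then show ?thesis using W_tele[of y n] Phi_le_Psi[of y] LS_Psi[of n y] by linarith
qed

lemma pow_small_Suc: "0 < eps \<Longrightarrow> \<exists>n. (p+q)^(Suc n) < eps"
proof -
  assume "0 < eps"
  then obtain n where n: "(p+q)^n < eps" using pow_small by blast
  have "(p+q)^(Suc n) \<le> (p+q)^n" using p_pos q_pos pq1 by (simp add: mult_left_le_one_le)
  then show ?thesis using n by (intro exI[of _ n]) linarith
qed

lemma f_ge_root: assumes r: "root y" shows "K * z powi (Nm y) \<le> f y"
proof (rule ccontr)
  assume "\<not> K * z powi (Nm y) \<le> f y"
  then have dpos: "0 < K * z powi (Nm y) - f y" by simp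
  define dl where "dl = K * z powi (Nm y) - f y"
  have Y0: "Y y = 0" by (rule Y_root[OF r])
  have pc: "chi u \<le> phi u" for u
    using mult_right_mono[OF f_le_KN[of u] FG_nn[of u]] by (simp add: phi_def chi_def mult_ac)
  have py: "phi y = chi y + dl * FG p q y" by (simp add: phi_def chi_def dl_def algebra_simps)
  have key: "dl * FG p q y - S * (p+q)^(Suc n) * FB p q y \<le> 0" for n
  proof -
    have "Y y = PS (Suc n) phi y + LS (Suc n) Y y" by (rule Y_tele)
    moreover have "0 \<le> LS (Suc n) Y y"
      using LS_mono[of y "\<lambda>u. 0" Y "Suc n"] Y_nonneg LS_zero by simp
    moreover have "PS (Suc n) chi y + dl * FG p q y \<le> PS (Suc n) phi y"
    proof -
      have "PS n chi (sg # y) \<le> PS n phi (sg # y)" by (rule PS_mono) (rule pc)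
      moreover have "PS n chi (sb # y) \<le> PS n phi (sb # y)" by (rule PS_mono) (rule pc)
      ultimately show ?thesis by (simp add: PS_Suc py)
    qed
    moreover have "- (S * (p+q)^(Suc n) * FB p q y) \<le> PS (Suc n) chi y" by (rule PS_chi_lb)
    ultimately show ?thesis using Y0 by linarith
  qed
  have "0 < dl * FG p q y / (S * FB p q y)"
    using dpos FG_pos[of y] S_pos FB_pos[of y] by (simp add: dl_def)
  then obtain n where n: "(p+q)^(Suc n) < dl * FG p q y / (S * FB p q y)" using pow_small_Suc by blast
  have "S * FB p q y > 0" using S_pos FB_pos[of y] by simp
  then have "(p+q)^(Suc n) * (S * FB p q y) < dl * FG p q y" using n by (metis pos_less_divide_eq)
  then show False using key[of n] by (simp add: mult_ac)
qed

lemma f_ge_KN: "K * z powi (Nm t) \<le> f t"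
proof (induction t)
  case Nil then show ?case by (intro f_ge_root) (simp add: root_def)
next
  case (Cons s t)
  show ?case
  proof (cases "root (s # t)")
    case True then show ?thesis by (rule f_ge_root)
  next
    case False
    then have "M (s # t) \<le> M t" by (simp add: root_def)
    moreover have "M t \<le> M (s # t)" by (rule M_mono) (simp add: prec_Cons)
    ultimately have ft: "f (s # t) = f t" by (simp add: f_def)
    have "Nm t \<le> Nm (s # t)" by (rule Nm_mono) (simp add: prec_Cons)
    then have "z powi (Nm (s # t)) \<le> z powi (Nm t)" using z_pos z_lt1 by (intro power_int_decreasing) auto
    then have "K * z powi (Nm (s # t)) \<le> K * z powi (Nm t)" using K_pos by simp
    then show ?thesis using Cons.IH ft by simp
  qed
qed

lemma f_eq: "f t = K * z powi (Nm t)"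
  using f_le_KN f_ge_KN by (metis antisym)

lemma rho_inj: "0 < x \<Longrightarrow> 0 < y \<Longrightarrow> rho x = rho y \<Longrightarrow> x = y"
  using rho_le_iff by (metis order_antisym order_refl)

lemma V_pos: "0 < Vval p q pi0 t" and V_rho: "rho (Vval p q pi0 t) = K * z powi (Nm t)"
proof -
  define c where "c = (p - al) / (q - al)"
  have c: "0 < c" using al_lt_q al_lt_p by (simp add: c_def)
  define X where "X = (1 - pi0) / pi0 * c * z powi (Nm t + 1)"
  have X: "0 < X" using c pi0 z_pos by (simp add: X_def)
  have V: "Vval p q pi0 t = 1 / (1 + X)"
    by (simp add: Vval_def X_def c_def al_def z_def Nmax_Nm)
  show "0 < Vval p q pi0 t" using X V by simp
  have iv: "1 / Vval p q pi0 t = 1 + X" by (simp add: V)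
  have "rho (Vval p q pi0 t) = pi0 / (1 - pi0) * X"
    using rho_alt[OF \<open>0 < Vval p q pi0 t\<close>] iv by simp
  also have "\<dots> = c * z powi (Nm t + 1)"
  proof -
    have "pi0 / (1 - pi0) * ((1 - pi0) / pi0) = 1" using pi0 by simp
    then show ?thesis unfolding X_def by (metis (no_types, lifting) mult.assoc mult_1)
  qed
  also have "\<dots> = K * z powi (Nm t)" using z_pos by (simp add: K_def c_def power_int_add mult_ac al_def)
  finally show "rho (Vval p q pi0 t) = K * z powi (Nm t)" .
qed

lemma M_eq_V: "M t = Vval p q pi0 t"
proof (rule rho_inj)
  show "0 < M t" by (rule M_pos)
  show "0 < Vval p q pi0 t" by (rule V_pos)
  show "rho (M t) = rho (Vval p q pi0 t)" using f_eq[of t] V_rho[of t] by (simp add: f_def)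
qed

lemma part1: "a e = mu e \<and> mu e = min (Vval p q pi0 e) (nu p q pi0 e)"
  using E3 a_min[of e] M_eq_V[of e] by (simp add: min.commute)

lemma crit: "M t \<le> nu p q pi0 t \<longleftrightarrow> real_of_int (Nmax t) - nstar p q \<le> real_of_int (Dd t)"
proof -
  have "M t \<le> nu p q pi0 t \<longleftrightarrow> rho (nu p q pi0 t) \<le> rho (M t)"
    using M_pos nu_pos by (simp add: rho_le_iff)
  also have "\<dots> \<longleftrightarrow> FB p q t / FG p q t \<le> f t" by (simp add: rho_nu f_def)
  also have "\<dots> \<longleftrightarrow> z powi (Dd t) \<le> K * z powi (Nm t)"
    using FG_pos[of t] by (simp add: f_eq FB_FG)
  also have "\<dots> \<longleftrightarrow> real_of_int (Nm t) - nstar p q \<le> real_of_int (Dd t)" by (rule crit_pow)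
  finally show ?thesis by (simp add: Nmax_Nm)
qed

lemma part2: "pmf (sig e) e = 1 \<longleftrightarrow> real_of_int (Dd e) \<ge> real_of_int (Nmax e) - nstar p q"
proof -
  have "pmf (sig e) e = 1 \<longleftrightarrow> M e \<le> nu p q pi0 e"
  proof
    assume "pmf (sig e) e = 1"
    then have "e \<in> set_pmf (sig e)" by (simp add: set_pmf_iff)
    then have "a e = M e" by (rule F1)
    then show "M e \<le> nu p q pi0 e" using a_min[of e] by simp
  next
    assume "M e \<le> nu p q pi0 e" then show "pmf (sig e) e = 1" by (rule F3)
  qed
  then show ?thesis using crit by simp
qed

end

context eqm begin

lemma phi_chi: "phi = chi"
  by (rule ext) (simp add: phi_def chi_def f_eq mult_ac)

lemma Y_peak_ub: assumes "Dd y = Nm y" shows "Y y \<le> 2 * S * (p+q)^n * FB p q y"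
proof -
  have W0: "Psi y - Phi y = 0"
    using assms phi2_diag[of "Nm y"] by (simp add: Psi_def Phi_def FB_FG mult_ac)
  have "PS n chi y = - LS n (\<lambda>u. Psi u - Phi u) y" using W_tele[of y n] W0 by simp
  also have "\<dots> = LS n Phi y - LS n Psi y" by (simp add: LS_diff)
  also have "\<dots> \<le> LS n Psi y - 0"
  proof -
    have "LS n Phi y \<le> LS n Psi y" by (rule LS_mono) (rule Phi_le_Psi)
    moreover have "0 \<le> LS n Psi y" using LS_Psi[of n y] S_pos FB_pos[of y] p_pos q_pos by simp
    ultimately show ?thesis by linarith
  qed
  finally have a1: "PS n chi y \<le> S * (p+q)^n * FB p q y" using LS_Psi by simp
  have a2: "LS n Y y \<le> LS n Psi y" by (rule LS_mono) (simp add: Psi_def Y_ub)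
  have "Y y = PS n phi y + LS n Y y" by (rule Y_tele)
  then show ?thesis using a1 a2 LS_Psi[of n y] by (simp add: phi_chi)
qed

lemma part3:
  assumes pos: "pmf (sig e) m > 0"
  shows "length m \<ge> Max {k. k \<le> length e \<and> Dd (restr e k) = Nmax e}"
proof (rule ccontr)
  define KS where "KS = {k. k \<le> length e \<and> Dd (restr e k) = Nmax e}"
  assume "\<not> length m \<ge> Max {k. k \<le> length e \<and> Dd (restr e k) = Nmax e}"
  then have lt: "length m < Max KS" by (simp add: KS_def)
  have fin: "finite KS" by (rule finite_subset[of _ "{..length e}"]) (auto simp: KS_def)
  have ne: "KS \<noteq> {}"
  proof -
    obtain y where y: "prec y e" "Dd y = Nm e" using Nm_attained by blast
    then have "length y \<in> KS" using y by (auto simp: KS_def prec_def Nmax_Nm)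
    then show ?thesis by blast
  qed
  define k' where "k' = Max KS"
  have k'in: "k' \<in> KS" using Max_in[OF fin ne] by (simp add: k'_def)
  define y' where "y' = restr e k'"
  have lk: "k' \<le> length e" using k'in by (simp add: KS_def)
  have ly: "length y' = k'" using lk by (simp add: y'_def restr_def)
  have py: "prec y' e" using lk ly by (simp add: prec_def y'_def)
  have Dy: "Dd y' = Nm e" using k'in by (simp add: KS_def y'_def Nmax_Nm)
  have Ny: "Nm y' = Nm e" using Nm_mono[OF py] Dd_le_Nm[of y'] Dy by simp
  have peak: "Dd y' = Nm y'" using Dy Ny by simp
  have m_in: "m \<in> set_pmf (sig e)" using pos by (simp add: pmf_positive_iff)
  have pm: "prec m e" by (rule E1[OF m_in])
  have lm: "length m < k'" using lt by (simp add: k'_def)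
  have mne: "m \<noteq> e" using lm lk by auto
  have npm: "\<not> prec y' m" using prec_len[of y' m] ly lm by linarith
  have bad: "0 < phi e"
  proof (rule ccontr)
    assume "\<not> 0 < phi e"
    then have "pmf (sig e) e = 1" using phi_le0_self by simp
    then have "pmf (sig e) m = 0" using pmf_only mne by blast
    then show False using pos by simp
  qed
  have out_ge: "pmf (sig e) m \<le> outp y' e"
  proof -
    have sub: "In y' e \<subseteq> {m. prec m e}" by (auto simp: In_def)
    have "(\<Sum>x\<in>{m. prec m e}. pmf (sig e) x) = (\<Sum>x\<in>In y' e. pmf (sig e) x) + (\<Sum>x\<in>{m. prec m e} - In y' e. pmf (sig e) x)"
      using sum.subset_diff[OF sub finite_suffixes, of "pmf (sig e)"] by (simp add: add.commute)
    moreover have "pmf (sig e) m \<le> (\<Sum>x\<in>{m. prec m e} - In y' e. pmf (sig e) x)"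
      by (rule member_le_sum) (use pm npm in \<open>auto simp: In_def\<close>)
    ultimately show ?thesis using pmf_sum1[of e] by (simp add: outp_def)
  qed
  have "phi e * pmf (sig e) m \<le> phi e * outp y' e" using out_ge bad by (simp add: mult_left_mono)
  also have "\<dots> \<le> Y y'" by (rule Y_ge[OF py])
  finally have lb: "phi e * pmf (sig e) m \<le> Y y'" .
  have "0 < phi e * pmf (sig e) m / (2 * S * FB p q y')"
    using bad pos S_pos FB_pos[of y'] by simp
  then obtain n where n: "(p+q)^n < phi e * pmf (sig e) m / (2 * S * FB p q y')" using pow_small by blast
  have "0 < 2 * S * FB p q y'" using S_pos FB_pos[of y'] by simp
  then have "(p+q)^n * (2 * S * FB p q y') < phi e * pmf (sig e) m" using n by (metis pos_less_divide_eq)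
  then show False using Y_peak_ub[OF peak, of n] lb by (simp add: mult_ac)
qed

end

theorem proposition6:
  fixes p q \<pi>0 :: real
  assumes "0 < q" and "q < p" and "p < 1" and "p + q < 1"
    and "0 < \<pi>0" and "\<pi>0 < 1"
  shows "nstar p q > 0 \<and>
    (\<forall>\<sigma> a \<mu>. equilibrium p q \<pi>0 \<sigma> a \<mu> \<longrightarrow>
      (\<forall>e.
        (a e = \<mu> e \<and> \<mu> e = min (Vval p q \<pi>0 e) (nu p q \<pi>0 e)) \<and>
        (pmf (\<sigma> e) e = 1 \<longleftrightarrow> real_of_int (Dd e) \<ge> real_of_int (Nmax e) - nstar p q) \<and>
        (\<forall>m. pmf (\<sigma> e) m > 0 \<longrightarrow>
           length m \<ge> Max {k. k \<le> length e \<and> Dd (restr e k) = Nmax e})))"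
proof -
  interpret P: params p q using assms by unfold_locales auto
  have ns: "nstar p q > 0" by (rule P.nstar_pos)
  have rest: "\<forall>\<sigma> a \<mu>. equilibrium p q \<pi>0 \<sigma> a \<mu> \<longrightarrow>
      (\<forall>e.
        (a e = \<mu> e \<and> \<mu> e = min (Vval p q \<pi>0 e) (nu p q \<pi>0 e)) \<and>
        (pmf (\<sigma> e) e = 1 \<longleftrightarrow> real_of_int (Dd e) \<ge> real_of_int (Nmax e) - nstar p q) \<and>
        (\<forall>m. pmf (\<sigma> e) m > 0 \<longrightarrow>
           length m \<ge> Max {k. k \<le> length e \<and> Dd (restr e k) = Nmax e}))"
  proof (intro allI impI)
    fix \<sigma> a \<mu> e
    assume eq: "equilibrium p q \<pi>0 \<sigma> a \<mu>"
    interpret Q: eqm p q \<pi>0 \<sigma> a \<mu> using assms eq by unfold_locales auto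
    show "(a e = \<mu> e \<and> \<mu> e = min (Vval p q \<pi>0 e) (nu p q \<pi>0 e)) \<and>
        (pmf (\<sigma> e) e = 1 \<longleftrightarrow> real_of_int (Dd e) \<ge> real_of_int (Nmax e) - nstar p q) \<and>
        (\<forall>m. pmf (\<sigma> e) m > 0 \<longrightarrow>
           length m \<ge> Max {k. k \<le> length e \<and> Dd (restr e k) = Nmax e})"
      using Q.part1[of e] Q.part2[of e] Q.part3 by blast
  qed
  from ns rest show ?thesis by blast
qed


end
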